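(* Let $N, M$ be positive integers, $a_1,a_2,a_3$ real numbers, and $c_{ij}$ ($1\le i\le N$, $1\le j\le M$) and $p_j$ ($1\le j\le M$) arbitrary real parameters. For integers $l,m,n,s$ define $$\eta_j(l,m,n,s)=p_js+\max(0,p_j-a_1)l+\max(0,p_j-a_2)m+\max(0,p_j-a_3)n,\qquad \varphi_i(l,m,n,s)=\max_{1\le j\le M}\big(c_{ij}+\eta_j(l,m,n,s)\big).$$ Write $\varphi_i(s)=\varphi_i(l,m,n,s)$ and $\boldsymbol\varphi(s)=(\varphi_1(s),\dots,\varphi_N(s))^T$. Then for every $M$, the following hold for all integers $l,m,n,s$ and all $1\le i,i_1,i_2\le N$: (1) $\varphi_i(l+1,m,n,s)=\max(\varphi_i(l,m,n,s),\varphi_i(l,m,n,s+1)-a_1)$, $\varphi_i(l,m+1,n,s)=\max(\varphi_i(l,m,n,s),\varphi_i(l,m,n,s+1)-a_2)$, $\varphi_i(l,m,n+1,s)=\max(\varphi_i(l,m,n,s),\varphi_i(l,m,n,s+1)-a_3)$; (2) $\varphi_{i_1}(s)+\varphi_{i_2}(s)\le\max\big(\varphi_{i_1}(s-1)+\varphi_{i_2}(s+1),\ \varphi_{i_2}(s-1)+\varphi_{i_1}(s+1)\big)$. Moreover, if $M\in\{1,2,3\}$, then for all integers $l,m,n$ and all $0\le k_1<k_2<k_3\le N$: (3) $$\begin{aligned}&\mathrm{UP}[\boldsymbol\varphi(0)\cdots\widehat{\boldsymbol\varphi(k_2)}\cdots\boldsymbol\varphi(N)]+\mathrm{UP}[\boldsymbol\varphi(0)\cdots\widehat{\boldsymbol\varphi(k_1)}\cdots\widehat{\boldsymbol\varphi(k_3)}\cdots\boldsymbol\varphi(N+1)]\\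 =\max\Big(&\mathrm{UP}[\boldsymbol\varphi(0)\cdots\widehat{\boldsymbol\varphi(k_3)}\cdots\boldsymbol\varphi(N)]+\mathrm{UP}[\boldsymbol\varphi(0)\cdots\widehat{\boldsymbol\varphi(k_1)}\cdots\widehat{\boldsymbol\varphi(k_2)}\cdots\boldsymbol\varphi(N+1)],\\ &\mathrm{UP}[\boldsymbol\varphi(0)\cdots\widehat{\boldsymbol\varphi(k_1)}\cdots\boldsymbol\varphi(N)]+\mathrm{UP}[\boldsymbol\varphi(0)\cdots\widehat{\boldsymbol\varphi(k_2)}\cdots\widehat{\boldsymbol\varphi(k_3)}\cdots\boldsymbol\varphi(N+1)]\Big).\end{aligned}$$
   Context: For a real $N\times N$ matrix $A=[a_{ij}]$, the ultradiscrete permanent is $\mathrm{UP}[A]=\max_{\pi}(a_{1\pi_1}+\cdots+a_{N\pi_N})$, maximum over all permutations $\pi$ of $\{1,\dots,N\}$. $\mathrm{UP}[\boldsymbol v_1\ \cdots\ \boldsymbol v_N]$ denotes the UP of the matrix with columns $\boldsymbol v_1,\dots,\boldsymbol v_N$ in that order; a hat $\widehat{\boldsymbol\varphi(k)}$ means that column is omitted from the list $\boldsymbol\varphi(0),\boldsymbol\varphi(1),\dots$ (so each matrix in (3) has exactly $N$ columns), all evaluated at the same $(l,m,n)$. *)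

theory Defs
  imports Complex_Main "HOL-Combinatorics.Permutations"
begin

definition eta :: "(nat \<Rightarrow> real) \<Rightarrow> real \<Rightarrow> real \<Rightarrow> real \<Rightarrow> nat \<Rightarrow> int \<Rightarrow> int \<Rightarrow> int \<Rightarrow> int \<Rightarrow> real" where
  "eta p a1 a2 a3 j l m n s =
     p j * of_int s + max 0 (p j - a1) * of_int l + max 0 (p j - a2) * of_int m
     + max 0 (p j - a3) * of_int n"

definition phi :: "nat \<Rightarrow> (nat \<Rightarrow> nat \<Rightarrow> real) \<Rightarrow> (nat \<Rightarrow> real) \<Rightarrow> real \<Rightarrow> real \<Rightarrow> real
                   \<Rightarrow> nat \<Rightarrow> int \<Rightarrow> int \<Rightarrow> int \<Rightarrow> int \<Rightarrow> real" where
  "phi M c p a1 a2 a3 i l m n s = (MAX j \<in> {1..M}. c i j + eta p a1 a2 a3 j l m n s)"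

definition UP :: "nat \<Rightarrow> (nat \<Rightarrow> nat \<Rightarrow> real) \<Rightarrow> real" where
  "UP N A = (MAX \<pi> \<in> {\<pi>. \<pi> permutes {1..N}}. \<Sum>i=1..N. A i (\<pi> i))"

text \<open>UP of the matrix whose j-th column (1 <= j <= N) is the vector v (ks ! (j-1)),
  where v k i is the i-th entry of the k-th vector.\<close>
definition UP_cols :: "nat \<Rightarrow> (nat \<Rightarrow> nat \<Rightarrow> real) \<Rightarrow> nat list \<Rightarrow> real" where
  "UP_cols N v ks = UP N (\<lambda>i j. v (ks ! (j - 1)) i)"

end

theory Submission
  imports Defs
begin


lemma top_bound:
  fixes \<kappa> :: "nat \<Rightarrow> real"
  assumes mono: "\<And>x y. 1 \<le> x \<Longrightarrow> x \<le> y \<Longrightarrow> y \<le> N \<Longrightarrow> \<kappa> x \<le> \<kappa> y"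
    and T: "T \<subseteq> {1..N}" and cT: "card T + u = N"
  shows "sum \<kappa> T \<le> sum \<kappa> {u+1..N}"
proof -
  define A where "A = {u+1..N}"
  have finT: "finite T" using T finite_subset by blast
  have finA: "finite A" unfolding A_def by simp
  have cA: "card A = card T" unfolding A_def using cT by simp
  have s1: "sum \<kappa> T = sum \<kappa> (T \<inter> A) + sum \<kappa> (T - A)" using sum.Int_Diff[OF finT] by blast
  have s2: "sum \<kappa> A = sum \<kappa> (A \<inter> T) + sum \<kappa> (A - T)" using sum.Int_Diff[OF finA] by blast
  have c1: "card T = card (T \<inter> A) + card (T - A)" using card_Int_Diff[OF finT] by blast
  have c2: "card A = card (A \<inter> T) + card (A - T)" using card_Int_Diff[OF finA] by blast
  have cc: "card (T - A) = card (A - T)" using c1 c2 cA by (simp add: Int_commute)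
  have key: "sum \<kappa> (T - A) \<le> sum \<kappa> (A - T)"
  proof (cases "T - A = {}")
    case True
    then have "card (A - T) = 0" using cc by (metis card.empty)
    then have "A - T = {}" using finA by simp
    then show ?thesis using True by simp
  next
    case False
    then obtain x0 where x0: "x0 \<in> T - A" by blast
    then have u1: "1 \<le> u" "u \<le> N" using T cT unfolding A_def by auto
    have "sum \<kappa> (T - A) \<le> of_nat (card (T - A)) * \<kappa> u"
      by (rule sum_bounded_above) (use T mono u1 in \<open>auto simp: A_def\<close>)
    also have "\<dots> = of_nat (card (A - T)) * \<kappa> u" using cc by simp
    also have "\<dots> \<le> sum \<kappa> (A - T)"
      by (rule sum_bounded_below) (use T mono u1 in \<open>auto simp: A_def\<close>)
    finally show ?thesis .
  qed
  show ?thesis using s1 s2 key unfolding A_def[symmetric] by (simp add: Int_commute)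
qed


definition Vf :: "(nat \<Rightarrow> nat \<Rightarrow> real) \<Rightarrow> (nat \<Rightarrow> real) \<Rightarrow> nat \<Rightarrow> nat \<Rightarrow> real" where
  "Vf W q k i = max (max (W i 1 + q 1 * real k) (W i 2 + q 2 * real k)) (W i 3 + q 3 * real k)"
definition sel :: "(nat \<Rightarrow> nat \<Rightarrow> real) \<Rightarrow> (nat \<Rightarrow> real) \<Rightarrow> nat \<Rightarrow> nat \<Rightarrow> nat" where
  "sel W q k i = (if max (W i 1 + q 1 * real k) (W i 2 + q 2 * real k) \<le> W i 3 + q 3 * real k then 3
     else if W i 1 + q 1 * real k \<le> W i 2 + q 2 * real k then 2 else 1)"
lemma Vf_sel: "Vf W q k i = W i (sel W q k i) + q (sel W q k i) * real k"
  unfolding Vf_def sel_def by (simp add: max_def)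
lemma sel_in: "sel W q k i \<in> {1,2,3}"
  unfolding sel_def by simp
lemma Vf_ge: "g \<in> {1,2,3} \<Longrightarrow> W i g + q g * real k \<le> Vf W q k i"
  unfolding Vf_def by auto

definition labs :: "nat \<Rightarrow> (nat \<Rightarrow> nat) \<Rightarrow> bool" where "labs N g \<longleftrightarrow> (\<forall>i\<in>{1..N}. g i \<in> {1,2,3})"
definition c1 :: "nat \<Rightarrow> (nat \<Rightarrow> nat) \<Rightarrow> nat" where "c1 N g = card {i\<in>{1..N}. g i = 1}"
definition c2 :: "nat \<Rightarrow> (nat \<Rightarrow> nat) \<Rightarrow> nat" where "c2 N g = card {i\<in>{1..N}. g i \<le> 2}"
definition Dg :: "(nat \<Rightarrow> nat \<Rightarrow> real) \<Rightarrow> nat \<Rightarrow> (nat \<Rightarrow> nat) \<Rightarrow> real" where "Dg W N g = (\<Sum>i=1..N. W i (g i))"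
definition TopS :: "nat \<Rightarrow> (nat \<Rightarrow> real) \<Rightarrow> nat \<Rightarrow> real" where "TopS N \<kappa> u = (\<Sum>j\<in>{u+1..N}. \<kappa> j)"
definition Rf :: "nat \<Rightarrow> (nat \<Rightarrow> real) \<Rightarrow> (nat \<Rightarrow> real) \<Rightarrow> (nat \<Rightarrow> nat) \<Rightarrow> real" where
  "Rf N q \<kappa> g = q 1 * TopS N \<kappa> 0 + (q 2 - q 1) * TopS N \<kappa> (c1 N g) + (q 3 - q 2) * TopS N \<kappa> (c2 N g)"

lemma card_split: "finite A \<Longrightarrow> card {x\<in>A. P x} + card {x\<in>A. \<not> P x} = card A"
proof -
  assume f: "finite A"
  have "card A = card (A \<inter> {x. P x}) + card (A - {x. P x})" using card_Int_Diff[OF f] by blast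
  moreover have "A \<inter> {x. P x} = {x\<in>A. P x}" "A - {x. P x} = {x\<in>A. \<not> P x}" by auto
  ultimately show ?thesis by simp
qed

lemma c1_le_c2: "labs N g \<Longrightarrow> c1 N g \<le> c2 N g"
  unfolding c1_def c2_def by (rule card_mono) auto
lemma c2_le: "c2 N g \<le> N"
proof -
  have "{i\<in>{1..N}. g i \<le> 2} \<subseteq> {1..N}" by auto
  then show ?thesis unfolding c2_def by (metis (no_types, lifting) card_atLeastAtMost card_mono diff_Suc_1 finite_atLeastAtMost)
qed

lemma perm_sub_bound:
  fixes \<kappa> :: "nat \<Rightarrow> real"
  assumes mono: "\<And>x y. 1 \<le> x \<Longrightarrow> x \<le> y \<Longrightarrow> y \<le> N \<Longrightarrow> \<kappa> x \<le> \<kappa> y"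
    and p: "\<pi> permutes {1..N}" and S: "S \<subseteq> {1..N}" and cS: "card S + u = N"
  shows "(\<Sum>i\<in>S. \<kappa> (\<pi> i)) \<le> TopS N \<kappa> u"
proof -
  have inj: "inj_on \<pi> S" using permutes_inj_on[OF p] .
  have "(\<Sum>i\<in>S. \<kappa> (\<pi> i)) = sum \<kappa> (\<pi> ` S)" using sum.reindex[OF inj, of \<kappa>] by simp
  also have "\<dots> \<le> sum \<kappa> {u+1..N}"
  proof (rule top_bound[OF mono])
    show "\<pi> ` S \<subseteq> {1..N}" using S permutes_image[OF p] by blast
    show "card (\<pi> ` S) + u = N" using card_image[OF inj] cS by simp
  qed auto
  finally show ?thesis unfolding TopS_def .
qed

lemma perm_sum_upper:
  fixes \<kappa> :: "nat \<Rightarrow> real"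
  assumes mono: "\<And>x y. 1 \<le> x \<Longrightarrow> x \<le> y \<Longrightarrow> y \<le> N \<Longrightarrow> \<kappa> x \<le> \<kappa> y"
    and p: "\<pi> permutes {1..N}" and g: "labs N g" and q12: "q 1 \<le> q 2" and q23: "q 2 \<le> q 3"
  shows "(\<Sum>i=1..N. q (g i) * \<kappa> (\<pi> i)) \<le> Rf N q \<kappa> g"
proof -
  let ?R = "{1..N}"
  have fin: "finite ?R" by simp
  have e: "\<And>i. i \<in> ?R \<Longrightarrow> q (g i) * \<kappa> (\<pi> i) = q 1 * \<kappa> (\<pi> i) + (q 2 - q 1) * (if g i \<noteq> 1 then \<kappa> (\<pi> i) else 0)
       + (q 3 - q 2) * (if \<not> g i \<le> 2 then \<kappa> (\<pi> i) else 0)"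
    using g unfolding labs_def by (auto simp: algebra_simps)
  have "(\<Sum>i\<in>?R. q (g i) * \<kappa> (\<pi> i)) = q 1 * (\<Sum>i\<in>?R. \<kappa> (\<pi> i)) + (q 2 - q 1) * (\<Sum>i\<in>?R. if g i \<noteq> 1 then \<kappa> (\<pi> i) else 0)
       + (q 3 - q 2) * (\<Sum>i\<in>?R. if \<not> g i \<le> 2 then \<kappa> (\<pi> i) else 0)"
  proof -
    have "(\<Sum>i\<in>?R. q (g i) * \<kappa> (\<pi> i)) = (\<Sum>i\<in>?R. q 1 * \<kappa> (\<pi> i) + (q 2 - q 1) * (if g i \<noteq> 1 then \<kappa> (\<pi> i) else 0)
       + (q 3 - q 2) * (if \<not> g i \<le> 2 then \<kappa> (\<pi> i) else 0))"
      by (rule sum.cong) (rule refl, rule e, assumption)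
    then show ?thesis by (simp only: sum.distrib sum_distrib_left)
  qed
  also have "(\<Sum>i\<in>?R. if g i \<noteq> 1 then \<kappa> (\<pi> i) else 0) = (\<Sum>i\<in>{i\<in>?R. g i \<noteq> 1}. \<kappa> (\<pi> i))"
    by (rule sum.inter_filter[OF fin, symmetric])
  also have "(\<Sum>i\<in>?R. if \<not> g i \<le> 2 then \<kappa> (\<pi> i) else 0) = (\<Sum>i\<in>{i\<in>?R. \<not> g i \<le> 2}. \<kappa> (\<pi> i))"
    by (rule sum.inter_filter[OF fin, symmetric])
  also have "(\<Sum>i\<in>?R. \<kappa> (\<pi> i)) = TopS N \<kappa> 0"
    unfolding TopS_def using sum.permute[OF p, of \<kappa>] by (simp add: comp_def)
  finally have eq: "(\<Sum>i\<in>?R. q (g i) * \<kappa> (\<pi> i)) = q 1 * TopS N \<kappa> 0 + (q 2 - q 1) * (\<Sum>i\<in>{i\<in>?R. g i \<noteq> 1}. \<kappa> (\<pi> i))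
       + (q 3 - q 2) * (\<Sum>i\<in>{i\<in>?R. \<not> g i \<le> 2}. \<kappa> (\<pi> i))" .
  have b1: "(\<Sum>i\<in>{i\<in>?R. g i \<noteq> 1}. \<kappa> (\<pi> i)) \<le> TopS N \<kappa> (c1 N g)"
    by (rule perm_sub_bound[OF mono p]) (use card_split[OF fin, of "\<lambda>i. g i = 1"] in \<open>auto simp: c1_def\<close>)
  have b2: "(\<Sum>i\<in>{i\<in>?R. \<not> g i \<le> 2}. \<kappa> (\<pi> i)) \<le> TopS N \<kappa> (c2 N g)"
    by (rule perm_sub_bound[OF mono p]) (use card_split[OF fin, of "\<lambda>i. g i \<le> 2"] in \<open>auto simp: c2_def\<close>)
  have "(q 2 - q 1) * (\<Sum>i\<in>{i\<in>?R. g i \<noteq> 1}. \<kappa> (\<pi> i)) \<le> (q 2 - q 1) * TopS N \<kappa> (c1 N g)"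
    using b1 q12 by (simp add: mult_left_mono)
  moreover have "(q 3 - q 2) * (\<Sum>i\<in>{i\<in>?R. \<not> g i \<le> 2}. \<kappa> (\<pi> i)) \<le> (q 3 - q 2) * TopS N \<kappa> (c2 N g)"
    using b2 q23 by (simp add: mult_left_mono)
  ultimately show ?thesis unfolding eq Rf_def by linarith
qed


lemma perm_sum_exact:
  fixes \<kappa> :: "nat \<Rightarrow> real"
  assumes g: "labs N g"
  shows "\<exists>\<pi>. \<pi> permutes {1..N} \<and> (\<Sum>i=1..N. q (g i) * \<kappa> (\<pi> i)) = Rf N q \<kappa> g"
proof -
  let ?R = "{1..N}"
  define u where "u = c1 N g"
  define w where "w = c2 N g"
  define G1 where "G1 = {i\<in>?R. g i = 1}"
  define G2 where "G2 = {i\<in>?R. g i = 2}"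
  define G3 where "G3 = {i\<in>?R. g i = 3}"
  define I1 where "I1 = {1..u}"
  define I2 where "I2 = {u+1..w}"
  define I3 where "I3 = {w+1..N}"
  have uw: "u \<le> w" "w \<le> N" unfolding u_def w_def using c1_le_c2[OF g] c2_le by auto
  have fin: "finite G1" "finite G2" "finite G3" unfolding G1_def G2_def G3_def by auto
  have cG1: "card G1 = u" unfolding G1_def u_def c1_def ..
  have "{i\<in>?R. g i \<le> 2} = G1 \<union> G2" unfolding G1_def G2_def using g unfolding labs_def by auto
  then have "w = card G1 + card G2" unfolding w_def c2_def using fin
    by (simp add: card_Un_disjoint G1_def G2_def disjoint_iff)
  then have cG2: "card G2 = w - u" using cG1 by simp
  have "{i\<in>?R. \<not> g i \<le> 2} = G3" unfolding G3_def using g unfolding labs_def by force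
  then have cG3: "card G3 = N - w" using card_split[of ?R "\<lambda>i. g i \<le> 2"] unfolding w_def c2_def by simp
  obtain b1 where b1: "bij_betw b1 G1 I1" using finite_same_card_bij[OF fin(1), of I1] cG1 unfolding I1_def by auto
  obtain b2 where b2: "bij_betw b2 G2 I2" using finite_same_card_bij[OF fin(2), of I2] cG2 unfolding I2_def by auto
  obtain b3 where b3: "bij_betw b3 G3 I3" using finite_same_card_bij[OF fin(3), of I3] cG3 unfolding I3_def by auto
  define \<pi> where "\<pi> i = (if i \<in> G1 then b1 i else if i \<in> G2 then b2 i else if i \<in> G3 then b3 i else i)" for i
  have d12: "G1 \<inter> G2 = {}" "G1 \<inter> G3 = {}" "G2 \<inter> G3 = {}" unfolding G1_def G2_def G3_def by auto
  have p1: "bij_betw \<pi> G1 I1"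
  proof -
    have "bij_betw \<pi> G1 I1 = bij_betw b1 G1 I1" by (rule bij_betw_cong) (use d12 in \<open>auto simp: \<pi>_def\<close>)
    then show ?thesis using b1 by simp
  qed
  have p2: "bij_betw \<pi> G2 I2"
  proof -
    have "bij_betw \<pi> G2 I2 = bij_betw b2 G2 I2" by (rule bij_betw_cong) (use d12 in \<open>auto simp: \<pi>_def\<close>)
    then show ?thesis using b2 by simp
  qed
  have p3: "bij_betw \<pi> G3 I3"
  proof -
    have "bij_betw \<pi> G3 I3 = bij_betw b3 G3 I3" by (rule bij_betw_cong) (use d12 in \<open>auto simp: \<pi>_def\<close>)
    then show ?thesis using b3 by simp
  qed
  have p123: "bij_betw \<pi> (G1 \<union> G2 \<union> G3) (I1 \<union> I2 \<union> I3)"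
  proof (rule bij_betw_combine[OF bij_betw_combine[OF p1 p2] p3])
    show "I1 \<inter> I2 = {}" unfolding I1_def I2_def by auto
    show "(I1 \<union> I2) \<inter> I3 = {}" unfolding I1_def I2_def I3_def using uw by auto
  qed
  have GR: "G1 \<union> G2 \<union> G3 = ?R" unfolding G1_def G2_def G3_def using g unfolding labs_def by auto
  have IR: "I1 \<union> I2 \<union> I3 = ?R" unfolding I1_def I2_def I3_def using uw by auto
  have perm: "\<pi> permutes ?R"
  proof (rule bij_imp_permutes)
    show "bij_betw \<pi> ?R ?R" using p123 GR IR by simp
    show "\<And>x. x \<notin> ?R \<Longrightarrow> \<pi> x = x" unfolding \<pi>_def using GR by auto
  qed
  have sR: "(\<Sum>i\<in>?R. q (g i) * \<kappa> (\<pi> i)) = (\<Sum>i\<in>G1. q (g i) * \<kappa> (\<pi> i)) + (\<Sum>i\<in>G2. q (g i) * \<kappa> (\<pi> i)) + (\<Sum>i\<in>G3. q (g i) * \<kappa> (\<pi> i))"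
    unfolding GR[symmetric] using fin d12 by (simp add: sum.union_disjoint Int_Un_distrib2)
  have s1: "(\<Sum>i\<in>G1. q (g i) * \<kappa> (\<pi> i)) = q 1 * sum \<kappa> I1"
  proof -
    have "(\<Sum>i\<in>G1. q (g i) * \<kappa> (\<pi> i)) = (\<Sum>i\<in>G1. q 1 * \<kappa> (\<pi> i))" by (rule sum.cong) (auto simp: G1_def)
    also have "\<dots> = q 1 * sum \<kappa> I1" using sum.reindex_bij_betw[OF p1, of \<kappa>] by (simp add: sum_distrib_left[symmetric])
    finally show ?thesis .
  qed
  have s2: "(\<Sum>i\<in>G2. q (g i) * \<kappa> (\<pi> i)) = q 2 * sum \<kappa> I2"
  proof -
    have "(\<Sum>i\<in>G2. q (g i) * \<kappa> (\<pi> i)) = (\<Sum>i\<in>G2. q 2 * \<kappa> (\<pi> i))" by (rule sum.cong) (auto simp: G2_def)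
    also have "\<dots> = q 2 * sum \<kappa> I2" using sum.reindex_bij_betw[OF p2, of \<kappa>] by (simp add: sum_distrib_left[symmetric])
    finally show ?thesis .
  qed
  have s3: "(\<Sum>i\<in>G3. q (g i) * \<kappa> (\<pi> i)) = q 3 * sum \<kappa> I3"
  proof -
    have "(\<Sum>i\<in>G3. q (g i) * \<kappa> (\<pi> i)) = (\<Sum>i\<in>G3. q 3 * \<kappa> (\<pi> i))" by (rule sum.cong) (auto simp: G3_def)
    also have "\<dots> = q 3 * sum \<kappa> I3" using sum.reindex_bij_betw[OF p3, of \<kappa>] by (simp add: sum_distrib_left[symmetric])
    finally show ?thesis .
  qed
  have t0: "TopS N \<kappa> 0 = sum \<kappa> I1 + sum \<kappa> I2 + sum \<kappa> I3"
  proof -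
    have "{0+1..N} = I1 \<union> I2 \<union> I3" using IR by simp
    moreover have "I1 \<inter> I2 = {}" "I1 \<inter> I3 = {}" "I2 \<inter> I3 = {}" unfolding I1_def I2_def I3_def using uw by auto
    moreover have "finite I1" "finite I2" "finite I3" unfolding I1_def I2_def I3_def by auto
    ultimately show ?thesis unfolding TopS_def by (simp add: sum.union_disjoint Int_Un_distrib2)
  qed
  have tu: "TopS N \<kappa> u = sum \<kappa> I2 + sum \<kappa> I3"
  proof -
    have "{u+1..N} = I2 \<union> I3" unfolding I2_def I3_def using uw by auto
    moreover have "I2 \<inter> I3 = {}" unfolding I2_def I3_def by auto
    ultimately show ?thesis unfolding TopS_def by (simp add: sum.union_disjoint I2_def I3_def)
  qed
  have tw: "TopS N \<kappa> w = sum \<kappa> I3" unfolding TopS_def I3_def ..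
  show ?thesis
  proof (intro exI conjI)
    show "\<pi> permutes ?R" by (rule perm)
    show "(\<Sum>i=1..N. q (g i) * \<kappa> (\<pi> i)) = Rf N q \<kappa> g"
      unfolding sR s1 s2 s3 Rf_def u_def[symmetric] w_def[symmetric] t0 tu tw by (simp add: algebra_simps)
  qed
qed


lemma UP_cols_eq: "UP_cols N v ks = Max ((\<lambda>\<pi>. \<Sum>i=1..N. v (ks ! (\<pi> i - 1)) i) ` {\<pi>. \<pi> permutes {1..N}})"
  unfolding UP_cols_def UP_def ..

lemma perms_fin: "finite {\<pi>. \<pi> permutes {1..(N::nat)}}" by (rule finite_permutations) simp
lemma perms_ne: "{\<pi>. \<pi> permutes {1..(N::nat)}} \<noteq> {}" using permutes_id by blast

lemma UP_upper:
  fixes ks :: "nat list" and \<kappa> :: "nat \<Rightarrow> real"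
  assumes kap: "\<And>j. \<kappa> j = real (ks ! (j - 1))"
    and mono: "\<And>x y. 1 \<le> x \<Longrightarrow> x \<le> y \<Longrightarrow> y \<le> N \<Longrightarrow> \<kappa> x \<le> \<kappa> y"
    and q12: "q 1 \<le> q 2" and q23: "q 2 \<le> q 3"
  shows "\<exists>g. labs N g \<and> UP_cols N (Vf W q) ks \<le> Dg W N g + Rf N q \<kappa> g"
proof -
  let ?P = "{\<pi>. \<pi> permutes {1..N}}"
  let ?F = "\<lambda>\<pi>. \<Sum>i=1..N. Vf W q (ks ! (\<pi> i - 1)) i"
  have "Max (?F ` ?P) \<in> ?F ` ?P" using perms_fin perms_ne by (intro Max_in) auto
  then obtain \<pi> where p: "\<pi> permutes {1..N}" and m: "UP_cols N (Vf W q) ks = ?F \<pi>"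
    unfolding UP_cols_eq by auto
  define g where "g i = sel W q (ks ! (\<pi> i - 1)) i" for i
  have lg: "labs N g" unfolding labs_def g_def using sel_in by blast
  have "?F \<pi> = (\<Sum>i=1..N. W i (g i) + q (g i) * \<kappa> (\<pi> i))"
    by (rule sum.cong) (simp_all add: Vf_sel g_def kap)
  also have "\<dots> = Dg W N g + (\<Sum>i=1..N. q (g i) * \<kappa> (\<pi> i))" unfolding Dg_def by (simp add: sum.distrib)
  also have "\<dots> \<le> Dg W N g + Rf N q \<kappa> g" using perm_sum_upper[OF mono p lg q12 q23] by simp
  finally show ?thesis using lg m by auto
qed

lemma UP_lower:
  fixes ks :: "nat list" and \<kappa> :: "nat \<Rightarrow> real"
  assumes kap: "\<And>j. \<kappa> j = real (ks ! (j - 1))" and g: "labs N g"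
  shows "Dg W N g + Rf N q \<kappa> g \<le> UP_cols N (Vf W q) ks"
proof -
  let ?P = "{\<pi>. \<pi> permutes {1..N}}"
  let ?F = "\<lambda>\<pi>. \<Sum>i=1..N. Vf W q (ks ! (\<pi> i - 1)) i"
  obtain \<pi> where p: "\<pi> permutes {1..N}" and e: "(\<Sum>i=1..N. q (g i) * \<kappa> (\<pi> i)) = Rf N q \<kappa> g"
    using perm_sum_exact[OF g] by blast
  have "Dg W N g + Rf N q \<kappa> g = (\<Sum>i=1..N. W i (g i) + q (g i) * \<kappa> (\<pi> i))"
    unfolding Dg_def e[symmetric] by (simp add: sum.distrib)
  also have "\<dots> \<le> ?F \<pi>"
    by (rule sum_mono) (use g in \<open>auto simp: labs_def kap intro!: Vf_ge\<close>)
  also have "\<dots> \<le> Max (?F ` ?P)" using perms_fin p by (intro Max_ge) auto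
  finally show ?thesis unfolding UP_cols_eq .
qed


lemma C1_split: "x \<le> N \<Longrightarrow> [k\<leftarrow>[0..<N+1]. k \<noteq> x] = [0..<x] @ [Suc x..<N+1]"
proof -
  assume x: "x \<le> N"
  have "[0..<N+1] = [0..<x] @ [x..<N+1]" using x upt_add_eq_append[of 0 x "N+1-x"] by simp
  also have "[x..<N+1] = x # [Suc x..<N+1]" using x by (simp add: upt_conv_Cons)
  finally have e: "[0..<N+1] = [0..<x] @ x # [Suc x..<N+1]" .
  have f1: "[k\<leftarrow>[0..<x]. k \<noteq> x] = [0..<x]" by (auto intro!: filter_True)
  have f2: "[k\<leftarrow>[Suc x..<N+1]. k \<noteq> x] = [Suc x..<N+1]"
    by (rule filter_True, intro ballI, subst (asm) set_upt) simp
  have "[k\<leftarrow>[0..<N+1]. k \<noteq> x] = [k\<leftarrow>[0..<x]. k \<noteq> x] @ [k\<leftarrow>[Suc x..<N+1]. k \<noteq> x]"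
    by (subst e) (simp del: upt_Suc)
  then show ?thesis using f1 f2 by (simp del: upt_Suc)
qed

lemma C1_len: "x \<le> N \<Longrightarrow> length [k\<leftarrow>[0..<N+1]. k \<noteq> x] = N"
  by (simp only: C1_split) simp

lemma C1_nth: "x \<le> N \<Longrightarrow> 1 \<le> j \<Longrightarrow> j \<le> N \<Longrightarrow> [k\<leftarrow>[0..<N+1]. k \<noteq> x] ! (j - 1) = j - 1 + (if x < j then 1 else 0)"
  by (simp only: C1_split) (auto simp: nth_append)

lemma C2_split: "y < z \<Longrightarrow> z \<le> N+1 \<Longrightarrow> [k\<leftarrow>[0..<N+2]. k \<noteq> y \<and> k \<noteq> z] = [0..<y] @ [Suc y..<z] @ [Suc z..<N+2]"
proof -
  assume yz: "y < z" "z \<le> N+1"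
  have "[0..<N+2] = [0..<y] @ [y..<N+2]" using yz upt_add_eq_append[of 0 y "N+2-y"] by simp
  also have "[y..<N+2] = y # [Suc y..<N+2]" using yz by (simp add: upt_conv_Cons)
  also have "[Suc y..<N+2] = [Suc y..<z] @ [z..<N+2]" using yz upt_add_eq_append[of "Suc y" z "N+2-z"] by simp
  also have "[z..<N+2] = z # [Suc z..<N+2]" using yz by (simp add: upt_conv_Cons)
  finally have e: "[0..<N+2] = [0..<y] @ y # [Suc y..<z] @ z # [Suc z..<N+2]" .
  have f1: "[k\<leftarrow>[0..<y]. k \<noteq> y \<and> k \<noteq> z] = [0..<y]" by (rule filter_True, intro ballI, subst (asm) set_upt) (use yz in simp)
  have f2: "[k\<leftarrow>[Suc y..<z]. k \<noteq> y \<and> k \<noteq> z] = [Suc y..<z]" by (rule filter_True, intro ballI, subst (asm) set_upt) simp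
  have f3: "[k\<leftarrow>[Suc z..<N+2]. k \<noteq> y \<and> k \<noteq> z] = [Suc z..<N+2]" by (rule filter_True, intro ballI, subst (asm) set_upt) (use yz in simp)
  have "[k\<leftarrow>[0..<N+2]. k \<noteq> y \<and> k \<noteq> z] = [k\<leftarrow>[0..<y]. k \<noteq> y \<and> k \<noteq> z] @ [k\<leftarrow>[Suc y..<z]. k \<noteq> y \<and> k \<noteq> z] @ [k\<leftarrow>[Suc z..<N+2]. k \<noteq> y \<and> k \<noteq> z]"
    by (subst e) (simp add: yz)
  then show ?thesis using f1 f2 f3 by simp
qed

lemma C2_len: "y < z \<Longrightarrow> z \<le> N+1 \<Longrightarrow> length [k\<leftarrow>[0..<N+2]. k \<noteq> y \<and> k \<noteq> z] = N"
  by (simp only: C2_split length_append length_upt)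

lemma C2_nth: "y < z \<Longrightarrow> z \<le> N+1 \<Longrightarrow> 1 \<le> j \<Longrightarrow> j \<le> N \<Longrightarrow>
   [k\<leftarrow>[0..<N+2]. k \<noteq> y \<and> k \<noteq> z] ! (j - 1) = j - 1 + (if y < j then 1 else 0) + (if z \<le> j then 1 else 0)"
  by (simp only: C2_split) (auto simp: nth_append; arith)


definition Psi :: "int\<Rightarrow>int\<Rightarrow>int\<Rightarrow>int\<Rightarrow>int\<Rightarrow>int" where
  "Psi x y z t t' = -(t*(t-1)) - t'*(t'-1) - 2*(max t x + max t' y + max t' (z-1))"

lemma sqf: "(d::int)*d \<ge> (2*j+1)*d - j*(j+1)"
proof -
  have "(d - j) * (d - j - 1) \<ge> (0::int)"
  proof (cases "d \<le> j")
    case True then show ?thesis by (simp add: mult_nonpos_nonpos)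
  next
    case False then show ?thesis by simp
  qed
  then show ?thesis by (simp add: algebra_simps)
qed

lemma Psi_even: "Psi x y z (h+d) (h-d) = -(h*(h-1)) - h*(h-1) - 2*(d*d) - 2*(max (h+d) x + max (h-d) y + max (h-d) (z-1))"
  unfolding Psi_def by (simp add: algebra_simps)
lemma Psi_odd: "Psi x y z (h+1+d) (h-d) = -((h+1)*h) - h*(h-1) - 2*(d*d) - 2*d - 2*(max (h+1+d) x + max (h-d) y + max (h-d) (z-1))"
  unfolding Psi_def by (simp add: algebra_simps)

lemma parity_split:
  fixes t t' :: int
  obtains h d where "t = h + d" "t' = h - d" "(t+t'+1) div 2 = h" "(t+t') div 2 = h"
    | h d where "t = h + 1 + d" "t' = h - d" "(t+t'+1) div 2 = h+1" "(t+t') div 2 = h"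
proof (cases "even (t+t')")
  case True
  then obtain h where "t + t' = 2*h" by (metis evenE)
  then show ?thesis using that(1)[of h "t-h"] by simp
next
  case False
  then obtain h where "t + t' = 2*h+1" by (metis oddE)
  then show ?thesis using that(2)[of h "t-h-1"] by simp
qed

lemma sqfs: fixes d :: int shows "d*d \<ge> d" "d*d \<ge> 3*d - 2" "d*d \<ge> 5*d - 6" "d*d \<ge> 7*d - 12" "d*d \<ge> 9*d - 20"
  "d*d \<ge> -d" "d*d \<ge> -3*d - 2" "d*d \<ge> -5*d - 6" "d*d \<ge> -7*d - 12"
  using sqf[where d=d and j=0] sqf[where d=d and j=1] sqf[where d=d and j=2] sqf[where d=d and j=3] sqf[where d=d and j=4]
   sqf[where d=d and j="-1"] sqf[where d=d and j="-2"] sqf[where d=d and j="-3"] sqf[where d=d and j="-4"] by simp_all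

lemma B1:
  fixes a b c t t' :: int
  assumes "0\<le>a" "a<b" "b<c" "0 \<le> t" "0 \<le> t'" 
  shows "Psi b a c ((t+t'+1) div 2) ((t+t') div 2) \<ge> Psi c a b t t'"
proof (cases t t' rule: parity_split)
  case (1 h d)
  have q: "t*(t-1) + t'*(t'-1) = 2*(h*(h-1)) + 2*(d*d)" unfolding 1(1,2) by (simp add: algebra_simps)
  show ?thesis unfolding 1(3,4) Psi_def using q sqfs[of d] assms
    by (smt (verit) 1(1,2))
next
  case (2 h d)
  have q: "t*(t-1) + t'*(t'-1) = (h+1)*h + h*(h-1) + 2*(d*d) + 2*d" unfolding 2(1,2) by (simp add: algebra_simps)
  show ?thesis unfolding 2(3,4) Psi_def using q sqfs[of d] assms
    by (smt (verit) 2(1,2))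
qed
lemma B2:
  fixes a b c t t' :: int
  assumes "0\<le>a" "a<b" "b<c" "0 \<le> t" "0 \<le> t'" 
  shows "Psi b a c ((t+t'+1) div 2) ((t+t') div 2) \<ge> Psi a b c t t'"
proof (cases t t' rule: parity_split)
  case (1 h d)
  have q: "t*(t-1) + t'*(t'-1) = 2*(h*(h-1)) + 2*(d*d)" unfolding 1(1,2) by (simp add: algebra_simps)
  show ?thesis unfolding 1(3,4) Psi_def using q sqfs[of d] assms
    by (smt (verit) 1(1,2))
next
  case (2 h d)
  have q: "t*(t-1) + t'*(t'-1) = (h+1)*h + h*(h-1) + 2*(d*d) + 2*d" unfolding 2(1,2) by (simp add: algebra_simps)
  show ?thesis unfolding 2(3,4) Psi_def using q sqfs[of d] assms
    by (smt (verit) 2(1,2))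
qed
lemma A1:
  fixes a b c t t' :: int
  assumes "0\<le>a" "a<b" "b<c" "0 \<le> t" "0 \<le> t'" "\<not>(t=t' \<and> b\<le>t \<and> t\<le>c-1)"
  shows "Psi c a b ((t+t'+1) div 2) ((t+t') div 2) \<ge> Psi b a c t t'"
proof (cases t t' rule: parity_split)
  case (1 h d)
  have q: "t*(t-1) + t'*(t'-1) = 2*(h*(h-1)) + 2*(d*d)" unfolding 1(1,2) by (simp add: algebra_simps)
  show ?thesis unfolding 1(3,4) Psi_def using q sqfs[of d] assms
    by (smt (verit) 1(1,2))
next
  case (2 h d)
  have q: "t*(t-1) + t'*(t'-1) = (h+1)*h + h*(h-1) + 2*(d*d) + 2*d" unfolding 2(1,2) by (simp add: algebra_simps)
  show ?thesis unfolding 2(3,4) Psi_def using q sqfs[of d] assms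
    by (smt (verit) 2(1,2))
qed
lemma A2:
  fixes a b c t t' :: int
  assumes "0\<le>a" "a<b" "b<c" "0 \<le> t" "0 \<le> t'" "\<not>(t=t'+1 \<and> a+1\<le>t \<and> t\<le>b)"
  shows "Psi a b c ((t+t'+1) div 2) ((t+t') div 2) \<ge> Psi b a c t t'"
proof (cases t t' rule: parity_split)
  case (1 h d)
  have q: "t*(t-1) + t'*(t'-1) = 2*(h*(h-1)) + 2*(d*d)" unfolding 1(1,2) by (simp add: algebra_simps)
  show ?thesis unfolding 1(3,4) Psi_def using q sqfs[of d] assms
    by (smt (verit) 1(1,2))
next
  case (2 h d)
  have q: "t*(t-1) + t'*(t'-1) = (h+1)*h + h*(h-1) + 2*(d*d) + 2*d" unfolding 2(1,2) by (simp add: algebra_simps)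
  show ?thesis unfolding 2(3,4) Psi_def using q sqfs[of d] assms
    by (smt (verit) 2(1,2))
qed
lemma A3:
  fixes a b c t t' :: int
  assumes "0\<le>a" "a<b" "b<c" "t = t'+1" "a+1\<le>t" "t\<le>b"
  shows "Psi a b c (t-1) (t'+1) \<ge> Psi b a c t t'"
proof -
  have q: "(t-1)*(t-1-1) + (t'+1)*(t'+1-1) = t*(t-1) + t'*(t'-1)" using assms(4) by (simp add: algebra_simps)
  show ?thesis unfolding Psi_def using q assms by (smt (verit))
qed
lemma A4:
  fixes a b c t t' :: int
  assumes "0\<le>a" "a<b" "b<c" "t = t'" "b\<le>t" "t\<le>c-1"
  shows "Psi c a b (t+1) (t'-1) \<ge> Psi b a c t t'"
proof -
  have q: "(t+1)*(t+1-1) + (t'-1)*(t'-1-1) = t*(t-1) + t'*(t'-1) + 2" using assms(4) by (simp add: algebra_simps)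
  show ?thesis unfolding Psi_def using q assms by (smt (verit))
qed


declare upt_Suc[simp del]

definition Lr :: "nat \<Rightarrow> nat \<Rightarrow> real" where "Lr N u = (\<Sum>j\<in>{u+1..N}. real (j - 1))"

lemma Lr_closed: "u \<le> N \<Longrightarrow> 2 * Lr N u = real N * (real N - 1) - real u * (real u - 1)"
proof (induction N)
  case 0 then show ?case by (simp add: Lr_def)
next
  case (Suc N)
  show ?case
  proof (cases "u = Suc N")
    case True then show ?thesis by (simp add: Lr_def)
  next
    case False
    then have u: "u \<le> N" using Suc.prems by simp
    have "{u+1..Suc N} = insert (Suc N) {u+1..N}" using u by auto
    then have "Lr (Suc N) u = Lr N u + real N" unfolding Lr_def by simp
    then show ?thesis using Suc.IH[OF u] by (simp add: algebra_simps)
  qed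
qed

lemma card_ind: "(\<Sum>j\<in>{(u::nat)+1..N}. (if P j then 1 else 0::real)) = real (card {j\<in>{u+1..N}. P j})"
proof -
  have "(\<Sum>j\<in>{u+1..N}. (if P j then 1 else 0::real)) = (\<Sum>j\<in>{j\<in>{u+1..N}. P j}. 1)"
  proof -
    have f: "finite {u+1..N}" by simp
    show ?thesis using sum.inter_filter[OF f, of "\<lambda>_. (1::real)" P] by simp
  qed
  then show ?thesis by simp
qed

lemma TopA:
  assumes "x \<le> N" "u \<le> N"
  shows "TopS N (\<lambda>j. real ([k\<leftarrow>[0..<N+1]. k \<noteq> x] ! (j - 1))) u = Lr N u + real (N - max u x)"
proof -
  have "TopS N (\<lambda>j. real ([k\<leftarrow>[0..<N+1]. k \<noteq> x] ! (j - 1))) u = (\<Sum>j\<in>{u+1..N}. real (j - 1) + (if x < j then 1 else 0))"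
    unfolding TopS_def by (rule sum.cong[OF refl], subst C1_nth[OF assms(1)]) auto
  also have "\<dots> = Lr N u + real (card {j\<in>{u+1..N}. x < j})"
    unfolding Lr_def sum.distrib card_ind ..
  also have "{j\<in>{u+1..N}. x < j} = {max u x + 1..N}" by auto
  finally show ?thesis by simp
qed

lemma TopB:
  assumes "y < z" "z \<le> N+1" "u \<le> N"
  shows "TopS N (\<lambda>j. real ([k\<leftarrow>[0..<N+2]. k \<noteq> y \<and> k \<noteq> z] ! (j - 1))) u
     = Lr N u + real (N - max u y) + real (N - max u (z - 1))"
proof -
  have "TopS N (\<lambda>j. real ([k\<leftarrow>[0..<N+2]. k \<noteq> y \<and> k \<noteq> z] ! (j - 1))) u
      = (\<Sum>j\<in>{u+1..N}. real (j - 1) + (if y < j then 1 else 0) + (if z \<le> j then 1 else 0))"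
    unfolding TopS_def by (rule sum.cong[OF refl], subst C2_nth[OF assms(1,2)]) auto
  also have "\<dots> = Lr N u + real (card {j\<in>{u+1..N}. y < j}) + real (card {j\<in>{u+1..N}. z \<le> j})"
    unfolding Lr_def sum.distrib card_ind ..
  also have "{j\<in>{u+1..N}. y < j} = {max u y + 1..N}" by auto
  also have "{j\<in>{u+1..N}. z \<le> j} = {max u (z - 1) + 1..N}" using assms by auto
  finally show ?thesis by simp
qed

lemma monoA: "x \<le> N \<Longrightarrow> 1 \<le> i \<Longrightarrow> i \<le> j \<Longrightarrow> j \<le> N \<Longrightarrow>
   real ([k\<leftarrow>[0..<N+1]. k \<noteq> x] ! (i - 1)) \<le> real ([k\<leftarrow>[0..<N+1]. k \<noteq> x] ! (j - 1))"
  using C1_nth[of x N i] C1_nth[of x N j] by simp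
lemma monoB: "y < z \<Longrightarrow> z \<le> N+1 \<Longrightarrow> 1 \<le> i \<Longrightarrow> i \<le> j \<Longrightarrow> j \<le> N \<Longrightarrow>
   real ([k\<leftarrow>[0..<N+2]. k \<noteq> y \<and> k \<noteq> z] ! (i - 1)) \<le> real ([k\<leftarrow>[0..<N+2]. k \<noteq> y \<and> k \<noteq> z] ! (j - 1))"
  using C2_nth[of y z N i] C2_nth[of y z N j] by simp

lemma pair_psi:
  assumes "x \<le> N" "y < z" "z \<le> N+1" "t \<le> N" "t' \<le> N"
  shows "2 * (TopS N (\<lambda>j. real ([k\<leftarrow>[0..<N+1]. k \<noteq> x] ! (j - 1))) t + TopS N (\<lambda>j. real ([k\<leftarrow>[0..<N+2]. k \<noteq> y \<and> k \<noteq> z] ! (j - 1))) t')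
    = 2 * real N * (real N - 1) + 6 * real N + real_of_int (Psi (int x) (int y) (int z) (int t) (int t'))"
proof -
  have z1: "int (z - 1) = int z - 1" using assms by simp
  have m1: "real (N - max t x) = real N - max (real t) (real x)" using assms by (simp add: of_nat_diff max_def)
  have m2: "real (N - max t' y) = real N - max (real t') (real y)" using assms by (simp add: of_nat_diff max_def)
  have zz: "real (z-1) = real z - 1" using assms by (simp add: of_nat_diff)
  have m3: "real (N - max t' (z-1)) = real N - max (real t') (real z - 1)"
  proof -
    have "max t' (z-1) \<le> N" using assms by simp
    then have "real (N - max t' (z-1)) = real N - real (max t' (z-1))" by (simp add: of_nat_diff)
    also have "real (max t' (z-1)) = max (real t') (real (z-1))" by (simp add: max_def)
    finally show ?thesis using zz by simp
  qed
  show ?thesis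
    unfolding TopA[OF assms(1,4)] TopB[OF assms(2,3,5)] Psi_def m1 m2 m3
    using Lr_closed[OF assms(4)] Lr_closed[OF assms(5)] by (simp add: max_def algebra_simps)
qed


definition sw :: "nat \<Rightarrow> (nat \<Rightarrow> nat) \<Rightarrow> (nat \<Rightarrow> nat) \<Rightarrow> (nat \<Rightarrow> nat) \<Rightarrow> (nat \<Rightarrow> nat) \<Rightarrow> bool" where
  "sw N g g' h h' \<longleftrightarrow> (\<forall>i\<in>{1..N}. (h i = g i \<and> h' i = g' i) \<or> (h i = g' i \<and> h' i = g i))"

lemma cnt_sum: "card {i\<in>{1..N::nat}. P i} = (\<Sum>i\<in>{1..N}. if P i then 1 else 0::nat)"
proof -
  have f: "finite {1..N}" by simp
  show ?thesis using sum.inter_filter[OF f, of "\<lambda>_. (1::nat)" P] by simp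
qed

lemma ind_sum: "X \<subseteq> {1..N::nat} \<Longrightarrow> (\<Sum>i\<in>{1..N}. if i \<in> X then 1 else 0::nat) = card X"
proof -
  assume X: "X \<subseteq> {1..N}"
  have f: "finite {1..N}" by simp
  have "(\<Sum>i\<in>{1..N}. if i \<in> X then 1 else 0::nat) = sum (\<lambda>_. 1) ({1..N} \<inter> X)"
    using sum.inter_restrict[OF f, of "\<lambda>_. (1::nat)" X] by simp
  also have "{1..N} \<inter> X = X" using X by auto
  finally show ?thesis by simp
qed

lemma sw_row: "sw N g g' h h' \<Longrightarrow> i \<in> {1..N} \<Longrightarrow> F (h i) + F (h' i) = F (g i) + (F (g' i)::'a::ab_semigroup_add)"
proof -
  assume s: "sw N g g' h h'" and i: "i \<in> {1..N}"
  then have "(h i = g i \<and> h' i = g' i) \<or> (h i = g' i \<and> h' i = g i)" unfolding sw_def by blast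
  then show ?thesis by (elim disjE) (simp_all add: add.commute)
qed

lemma sw_D: "sw N g g' h h' \<Longrightarrow> Dg W N h + Dg W N h' = Dg W N g + Dg W N g'"
proof -
  assume s: "sw N g g' h h'"
  have "Dg W N h + Dg W N h' = (\<Sum>i=1..N. W i (h i) + W i (h' i))" unfolding Dg_def by (simp add: sum.distrib)
  also have "\<dots> = (\<Sum>i=1..N. W i (g i) + W i (g' i))"
    by (rule sum.cong[OF refl], rule sw_row[OF s])
  finally show ?thesis unfolding Dg_def by (simp add: sum.distrib)
qed

lemma sw_c1: "sw N g g' h h' \<Longrightarrow> c1 N h + c1 N h' = c1 N g + c1 N g'"
proof -
  assume s: "sw N g g' h h'"
  have "c1 N h + c1 N h' = (\<Sum>i=1..N. (if h i = 1 then 1 else 0) + (if h' i = 1 then 1 else 0))" unfolding c1_def cnt_sum by (simp add: sum.distrib)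
  also have "\<dots> = (\<Sum>i=1..N. (if g i = 1 then 1 else 0) + (if g' i = 1 then 1 else 0))"
    by (rule sum.cong[OF refl], rule sw_row[OF s])
  finally show ?thesis unfolding c1_def cnt_sum by (simp add: sum.distrib)
qed

lemma sw_c2: "sw N g g' h h' \<Longrightarrow> c2 N h + c2 N h' = c2 N g + c2 N g'"
proof -
  assume s: "sw N g g' h h'"
  have "c2 N h + c2 N h' = (\<Sum>i=1..N. (if h i \<le> 2 then 1 else 0) + (if h' i \<le> 2 then 1 else 0))" unfolding c2_def cnt_sum by (simp add: sum.distrib)
  also have "\<dots> = (\<Sum>i=1..N. (if g i \<le> 2 then 1 else 0) + (if g' i \<le> 2 then 1 else 0))"
    by (rule sum.cong[OF refl], rule sw_row[OF s])
  finally show ?thesis unfolding c2_def cnt_sum by (simp add: sum.distrib)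
qed

lemma sw_labs: "sw N g g' h h' \<Longrightarrow> labs N g \<Longrightarrow> labs N g' \<Longrightarrow> labs N h \<and> labs N h'"
  unfolding sw_def labs_def by metis


lemma arith1: "e + (if odd b then a div 2 else (a+1) div 2) + (b+1) div 2 = (2*e + a + b + 1) div (2::nat)"
  by (cases "odd b") (auto elim!: oddE evenE)

lemma balance:
  assumes g: "labs N g" and g': "labs N g'"
  shows "\<exists>h h'. sw N g g' h h' \<and> c1 N h = (c1 N g + c1 N g' + 1) div 2 \<and> c2 N h = (c2 N g + c2 N g' + 1) div 2"
proof -
  let ?R = "{1..N}"
  define P12 where "P12 = {i\<in>?R. (g i = 1 \<and> g' i = 2) \<or> (g i = 2 \<and> g' i = 1)}"
  define P13 where "P13 = {i\<in>?R. (g i = 1 \<and> g' i = 3) \<or> (g i = 3 \<and> g' i = 1)}"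
  define P23 where "P23 = {i\<in>?R. (g i = 2 \<and> g' i = 3) \<or> (g i = 3 \<and> g' i = 2)}"
  define E1 where "E1 = {i\<in>?R. g i = 1 \<and> g' i = 1}"
  define E2 where "E2 = {i\<in>?R. g i \<le> 2 \<and> g' i \<le> 2}"
  define k13 where "k13 = (card P13 + 1) div 2"
  define k12 where "k12 = (if odd (card P13) then card P12 div 2 else (card P12 + 1) div 2)"
  define k23 where "k23 = (if odd (card P13) then card P23 div 2 else (card P23 + 1) div 2)"
  have fP: "finite P12" "finite P13" "finite P23" unfolding P12_def P13_def P23_def by auto
  have "k12 \<le> card P12" unfolding k12_def by auto
  then obtain X12 where X12: "X12 \<subseteq> P12" "card X12 = k12" by (meson obtain_subset_with_card_n)
  have "k13 \<le> card P13" unfolding k13_def by auto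
  then obtain X13 where X13: "X13 \<subseteq> P13" "card X13 = k13" by (meson obtain_subset_with_card_n)
  have "k23 \<le> card P23" unfolding k23_def by auto
  then obtain X23 where X23: "X23 \<subseteq> P23" "card X23 = k23" by (meson obtain_subset_with_card_n)
  define X where "X = X12 \<union> X13 \<union> X23"
  define h where "h i = (if i \<in> X then min (g i) (g' i) else max (g i) (g' i))" for i
  define h' where "h' i = (if i \<in> X then max (g i) (g' i) else min (g i) (g' i))" for i
  have s: "sw N g g' h h'" unfolding sw_def h_def h'_def by (auto simp: min_def max_def)
  have m12: "\<And>i. i \<in> X12 \<Longrightarrow> (g i = 1 \<and> g' i = 2) \<or> (g i = 2 \<and> g' i = 1)" using X12 unfolding P12_def by blast
  have m13: "\<And>i. i \<in> X13 \<Longrightarrow> (g i = 1 \<and> g' i = 3) \<or> (g i = 3 \<and> g' i = 1)" using X13 unfolding P13_def by blast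
  have m23: "\<And>i. i \<in> X23 \<Longrightarrow> (g i = 2 \<and> g' i = 3) \<or> (g i = 3 \<and> g' i = 2)" using X23 unfolding P23_def by blast
  have row1: "\<And>i. i \<in> ?R \<Longrightarrow> (if h i = 1 then 1 else 0::nat) = (if i \<in> E1 then 1 else 0) + (if i \<in> X12 then 1 else 0) + (if i \<in> X13 then 1 else 0)"
  proof -
    fix i assume i: "i \<in> ?R"
    have "g i \<in> {1,2,3}" "g' i \<in> {1,2,3}" using g g' i unfolding labs_def by auto
    then show "?thesis i" using m12[of i] m13[of i] m23[of i] i unfolding h_def X_def E1_def
      by (auto simp: min_def max_def)
  qed
  have row1g: "\<And>i. i \<in> ?R \<Longrightarrow> (if g i = 1 then 1 else 0::nat) + (if g' i = 1 then 1 else 0) = 2 * (if i \<in> E1 then 1 else 0) + (if i \<in> P12 then 1 else 0) + (if i \<in> P13 then 1 else 0)"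
  proof -
    fix i assume i: "i \<in> ?R"
    have "g i \<in> {1,2,3}" "g' i \<in> {1,2,3}" using g g' i unfolding labs_def by auto
    then show "?thesis i" using i unfolding E1_def P12_def P13_def by auto
  qed
  have row2: "\<And>i. i \<in> ?R \<Longrightarrow> (if h i \<le> 2 then 1 else 0::nat) = (if i \<in> E2 then 1 else 0) + (if i \<in> X13 then 1 else 0) + (if i \<in> X23 then 1 else 0)"
  proof -
    fix i assume i: "i \<in> ?R"
    have "g i \<in> {1,2,3}" "g' i \<in> {1,2,3}" using g g' i unfolding labs_def by auto
    then show "?thesis i" using m12[of i] m13[of i] m23[of i] i unfolding h_def X_def E2_def
      by (auto simp: min_def max_def)
  qed
  have row2g: "\<And>i. i \<in> ?R \<Longrightarrow> (if g i \<le> 2 then 1 else 0::nat) + (if g' i \<le> 2 then 1 else 0) = 2 * (if i \<in> E2 then 1 else 0) + (if i \<in> P13 then 1 else 0) + (if i \<in> P23 then 1 else 0)"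
  proof -
    fix i assume i: "i \<in> ?R"
    have "g i \<in> {1,2,3}" "g' i \<in> {1,2,3}" using g g' i unfolding labs_def by auto
    then show "?thesis i" using i unfolding E2_def P13_def P23_def by auto
  qed
  have sub: "E1 \<subseteq> ?R" "E2 \<subseteq> ?R" "X12 \<subseteq> ?R" "X13 \<subseteq> ?R" "X23 \<subseteq> ?R" "P12 \<subseteq> ?R" "P13 \<subseteq> ?R" "P23 \<subseteq> ?R"
    using X12 X13 X23 unfolding E1_def E2_def P12_def P13_def P23_def by auto
  have h1: "c1 N h = card E1 + k12 + k13"
  proof -
    have "c1 N h = (\<Sum>i\<in>?R. (if i \<in> E1 then 1 else 0) + (if i \<in> X12 then 1 else 0) + (if i \<in> X13 then 1 else 0::nat))"
      unfolding c1_def cnt_sum by (rule sum.cong[OF refl], rule row1)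
    also have "\<dots> = card E1 + card X12 + card X13" by (simp only: sum.distrib ind_sum[OF sub(1)] ind_sum[OF sub(3)] ind_sum[OF sub(4)])
    finally show ?thesis using X12 X13 by simp
  qed
  have g1: "c1 N g + c1 N g' = 2 * card E1 + card P12 + card P13"
  proof -
    have "c1 N g + c1 N g' = (\<Sum>i\<in>?R. (if g i = 1 then 1 else 0::nat) + (if g' i = 1 then 1 else 0))"
      unfolding c1_def cnt_sum by (simp add: sum.distrib)
    also have "\<dots> = (\<Sum>i\<in>?R. 2 * (if i \<in> E1 then 1 else 0) + (if i \<in> P12 then 1 else 0) + (if i \<in> P13 then 1 else 0::nat))"
      by (rule sum.cong[OF refl], rule row1g)
    also have "\<dots> = 2 * card E1 + card P12 + card P13" by (simp only: sum.distrib sum_distrib_left[symmetric] ind_sum[OF sub(1)] ind_sum[OF sub(6)] ind_sum[OF sub(7)])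
    finally show ?thesis .
  qed
  have h2: "c2 N h = card E2 + k23 + k13"
  proof -
    have "c2 N h = (\<Sum>i\<in>?R. (if i \<in> E2 then 1 else 0) + (if i \<in> X13 then 1 else 0) + (if i \<in> X23 then 1 else 0::nat))"
      unfolding c2_def cnt_sum by (rule sum.cong[OF refl], rule row2)
    also have "\<dots> = card E2 + card X13 + card X23" by (simp only: sum.distrib ind_sum[OF sub(2)] ind_sum[OF sub(4)] ind_sum[OF sub(5)])
    finally show ?thesis using X13 X23 by linarith
  qed
  have g2: "c2 N g + c2 N g' = 2 * card E2 + card P23 + card P13"
  proof -
    have "c2 N g + c2 N g' = (\<Sum>i\<in>?R. (if g i \<le> 2 then 1 else 0::nat) + (if g' i \<le> 2 then 1 else 0))"
      unfolding c2_def cnt_sum by (simp add: sum.distrib)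
    also have "\<dots> = (\<Sum>i\<in>?R. 2 * (if i \<in> E2 then 1 else 0) + (if i \<in> P13 then 1 else 0) + (if i \<in> P23 then 1 else 0::nat))"
      by (rule sum.cong[OF refl], rule row2g)
    also have "\<dots> = 2 * card E2 + card P13 + card P23" by (simp only: sum.distrib sum_distrib_left[symmetric] ind_sum[OF sub(2)] ind_sum[OF sub(7)] ind_sum[OF sub(8)])
    finally show ?thesis by linarith
  qed
  have "c1 N h = (c1 N g + c1 N g' + 1) div 2" unfolding h1 g1 k12_def k13_def by (rule arith1)
  moreover have "c2 N h = (c2 N g + c2 N g' + 1) div 2" unfolding h2 g2 k23_def k13_def by (rule arith1)
  ultimately show ?thesis using s by blast
qed


lemma card_le2: "labs N g \<Longrightarrow> c2 N g = c1 N g + card {i\<in>{1..N}. g i = 2}"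
proof -
  assume g: "labs N g"
  have "{i\<in>{1..N}. g i \<le> 2} = {i\<in>{1..N}. g i = 1} \<union> {i\<in>{1..N}. g i = 2}" using g unfolding labs_def by auto
  then show ?thesis unfolding c2_def c1_def by (simp add: card_Un_disjoint disjoint_iff)
qed

lemma flip:
  assumes g: "labs N g" and g': "labs N g'" and e1: "c1 N g = c1 N g' + 1" and e2: "c2 N g = c2 N g'"
  shows "(\<exists>h h'. sw N g g' h h' \<and> c1 N h + 1 = c1 N g \<and> c2 N h = c2 N g)
       \<or> (\<exists>h h'. sw N g g' h h' \<and> c1 N h = c1 N g \<and> c2 N h = c2 N g + 1)"
proof -
  let ?R = "{1..N}"
  have "card {i\<in>?R. g i = 2} + 1 = card {i\<in>?R. g' i = 2}" using card_le2[OF g] card_le2[OF g'] e1 e2 by simp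
  then have "\<not> {i\<in>?R. g' i = 2} \<subseteq> {i\<in>?R. g i = 2}"
    using card_mono[of "{i\<in>?R. g i = 2}" "{i\<in>?R. g' i = 2}"] by auto
  then obtain i0 where i0: "i0 \<in> ?R" "g' i0 = 2" "g i0 \<noteq> 2" by auto
  have gi0: "g i0 = 1 \<or> g i0 = 3" using g i0 unfolding labs_def by auto
  define h where "h = g(i0 := 2)"
  define h' where "h' = g'(i0 := g i0)"
  have s: "sw N g g' h h'" unfolding sw_def h_def h'_def using i0 by auto
  show ?thesis
  proof (cases "g i0 = 1")
    case True
    have a: "{i\<in>?R. h i = 1} = {i\<in>?R. g i = 1} - {i0}" unfolding h_def by auto
    have b: "{i\<in>?R. h i \<le> 2} = {i\<in>?R. g i \<le> 2}" unfolding h_def using True i0 by auto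
    have m: "i0 \<in> {i\<in>?R. g i = 1}" using True i0 by simp
    have "c1 N h + 1 = c1 N g" unfolding c1_def a using card_Suc_Diff1[OF _ m] by simp
    moreover have "c2 N h = c2 N g" unfolding c2_def b ..
    ultimately show ?thesis using s by blast
  next
    case False
    then have g3: "g i0 = 3" using gi0 by simp
    have a: "{i\<in>?R. h i = 1} = {i\<in>?R. g i = 1}" unfolding h_def using g3 by auto
    have b: "{i\<in>?R. h i \<le> 2} = insert i0 {i\<in>?R. g i \<le> 2}" unfolding h_def using g3 i0 by auto
    have "c1 N h = c1 N g" unfolding c1_def a ..
    moreover have "c2 N h = c2 N g + 1" unfolding c2_def b using g3 by simp
    ultimately show ?thesis using s by blast
  qed
qed


definition LA :: "nat \<Rightarrow> nat \<Rightarrow> nat list" where "LA N x = [k\<leftarrow>[0..<N+1]. k \<noteq> x]"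
definition LB :: "nat \<Rightarrow> nat \<Rightarrow> nat \<Rightarrow> nat list" where "LB N y z = [k\<leftarrow>[0..<N+2]. k \<noteq> y \<and> k \<noteq> z]"
definition kA :: "nat \<Rightarrow> nat \<Rightarrow> nat \<Rightarrow> real" where "kA N x = (\<lambda>j. real (LA N x ! (j - 1)))"
definition kB :: "nat \<Rightarrow> nat \<Rightarrow> nat \<Rightarrow> nat \<Rightarrow> real" where "kB N y z = (\<lambda>j. real (LB N y z ! (j - 1)))"
definition GG :: "nat \<Rightarrow> nat \<Rightarrow> nat \<Rightarrow> nat \<Rightarrow> nat \<Rightarrow> nat \<Rightarrow> real" where
  "GG N x y z t t' = TopS N (kA N x) t + TopS N (kB N y z) t'"

lemma GG_psi:
  assumes "x \<le> N" "y < z" "z \<le> N+1" "t \<le> N" "t' \<le> N"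
  shows "2 * GG N x y z t t' = 2 * real N * (real N - 1) + 6 * real N + real_of_int (Psi (int x) (int y) (int z) (int t) (int t'))"
  unfolding GG_def kA_def kB_def LA_def LB_def using pair_psi[OF assms] .

lemma Psi00: "z \<ge> 1 \<Longrightarrow> Psi (int x) (int y) (int z) 0 0 = - 2 * (int x + int y + int z - 1)"
  unfolding Psi_def by simp

lemma c1_le: "labs N g \<Longrightarrow> c1 N g \<le> N" using c1_le_c2 c2_le le_trans by blast

lemma compare:
  fixes x1 y1 z1 x2 y2 z2 :: nat
  assumes v1: "x1 \<le> N" "y1 < z1" "z1 \<le> N+1" and v2: "x2 \<le> N" "y2 < z2" "z2 \<le> N+1"
    and sm: "x1 + y1 + z1 = x2 + y2 + z2"
    and lg: "labs N g" "labs N g'" "labs N h" "labs N h'" and s: "sw N g g' h h'"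
    and q12: "q 1 \<le> q 2" and q23: "q 2 \<le> q 3"
    and P1: "Psi (int x1) (int y1) (int z1) (int (c1 N g)) (int (c1 N g')) \<le> Psi (int x2) (int y2) (int z2) (int (c1 N h)) (int (c1 N h'))"
    and P2: "Psi (int x1) (int y1) (int z1) (int (c2 N g)) (int (c2 N g')) \<le> Psi (int x2) (int y2) (int z2) (int (c2 N h)) (int (c2 N h'))"
  shows "Dg W N g + Dg W N g' + Rf N q (kA N x1) g + Rf N q (kB N y1 z1) g'
       \<le> Dg W N h + Dg W N h' + Rf N q (kA N x2) h + Rf N q (kB N y2 z2) h'"
proof -
  have bd: "c1 N g \<le> N" "c1 N g' \<le> N" "c1 N h \<le> N" "c1 N h' \<le> N" "c2 N g \<le> N" "c2 N g' \<le> N" "c2 N h \<le> N" "c2 N h' \<le> N"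
    using lg c1_le c2_le by auto
  have R: "\<And>x y z g g'. Rf N q (kA N x) g + Rf N q (kB N y z) g' = q 1 * GG N x y z 0 0 + (q 2 - q 1) * GG N x y z (c1 N g) (c1 N g') + (q 3 - q 2) * GG N x y z (c2 N g) (c2 N g')"
    unfolding Rf_def GG_def by (simp add: algebra_simps)
  have e0: "GG N x1 y1 z1 0 0 = GG N x2 y2 z2 0 0"
  proof -
    have "2 * GG N x1 y1 z1 0 0 = 2 * GG N x2 y2 z2 0 0"
      using GG_psi[OF v1, of 0 0] GG_psi[OF v2, of 0 0] Psi00[of z1 x1 y1] Psi00[of z2 x2 y2] v1 v2 sm
      by simp
    then show ?thesis by simp
  qed
  have e1: "GG N x1 y1 z1 (c1 N g) (c1 N g') \<le> GG N x2 y2 z2 (c1 N h) (c1 N h')"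
  proof -
    have "real_of_int (Psi (int x1) (int y1) (int z1) (int (c1 N g)) (int (c1 N g'))) \<le> real_of_int (Psi (int x2) (int y2) (int z2) (int (c1 N h)) (int (c1 N h')))"
      using P1 by linarith
    then show ?thesis using GG_psi[OF v1 bd(1,2)] GG_psi[OF v2 bd(3,4)] by linarith
  qed
  have e2: "GG N x1 y1 z1 (c2 N g) (c2 N g') \<le> GG N x2 y2 z2 (c2 N h) (c2 N h')"
  proof -
    have "real_of_int (Psi (int x1) (int y1) (int z1) (int (c2 N g)) (int (c2 N g'))) \<le> real_of_int (Psi (int x2) (int y2) (int z2) (int (c2 N h)) (int (c2 N h')))"
      using P2 by linarith
    then show ?thesis using GG_psi[OF v1 bd(5,6)] GG_psi[OF v2 bd(7,8)] by linarith
  qed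
  have m1: "(q 2 - q 1) * GG N x1 y1 z1 (c1 N g) (c1 N g') \<le> (q 2 - q 1) * GG N x2 y2 z2 (c1 N h) (c1 N h')"
    using e1 q12 by (simp add: mult_left_mono)
  have m2: "(q 3 - q 2) * GG N x1 y1 z1 (c2 N g) (c2 N g') \<le> (q 3 - q 2) * GG N x2 y2 z2 (c2 N h) (c2 N h')"
    using e2 q23 by (simp add: mult_left_mono)
  have e0': "q 1 * GG N x1 y1 z1 0 0 = q 1 * GG N x2 y2 z2 0 0" using e0 by simp
  have "Dg W N h + Dg W N h' = Dg W N g + Dg W N g'" using sw_D[OF s] .
  then show ?thesis using e0'  R[where x=x1 and y=y1 and z=z1 and g=g and g'=g'] R[where x=x2 and y=y2 and z=z2 and g=h and g'=h'] e0 m1 m2 by linarith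
qed


lemma half_int: "A = (S+1) div 2 \<Longrightarrow> A + B = (S::nat) \<Longrightarrow> int A = (int S + 1) div 2 \<and> int B = int S div 2"
proof -
  assume a: "A = (S+1) div 2" and b: "A + B = S"
  obtain k where "S = 2*k \<or> S = 2*k+1" by (metis oddE evenE)
  then show ?thesis
  proof
    assume S: "S = 2*k"
    then have "A = k" "B = k" using a b by auto
    then show ?thesis using S by simp
  next
    assume S: "S = 2*k+1"
    then have "A = k+1" "B = k" using a b by auto
    then show ?thesis using S by simp
  qed
qed

lemma bal_int:
  assumes g: "labs N g" and g': "labs N g'"
  shows "\<exists>h h'. sw N g g' h h' \<and> labs N h \<and> labs N h' \<and>
     int (c1 N h) = (int (c1 N g) + int (c1 N g') + 1) div 2 \<and> int (c1 N h') = (int (c1 N g) + int (c1 N g')) div 2 \<and>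
     int (c2 N h) = (int (c2 N g) + int (c2 N g') + 1) div 2 \<and> int (c2 N h') = (int (c2 N g) + int (c2 N g')) div 2"
proof -
  obtain h h' where s: "sw N g g' h h'" and h1: "c1 N h = (c1 N g + c1 N g' + 1) div 2" and h2: "c2 N h = (c2 N g + c2 N g' + 1) div 2"
    using balance[OF g g'] by blast
  have a1: "c1 N h + c1 N h' = c1 N g + c1 N g'" using sw_c1[OF s] .
  have a2: "c2 N h + c2 N h' = c2 N g + c2 N g'" using sw_c2[OF s] .
  from half_int[OF h1 a1] have i1: "int (c1 N h) = (int (c1 N g + c1 N g') + 1) div 2" "int (c1 N h') = int (c1 N g + c1 N g') div 2" by auto
  from half_int[OF h2 a2] have i2: "int (c2 N h) = (int (c2 N g + c2 N g') + 1) div 2" "int (c2 N h') = int (c2 N g + c2 N g') div 2" by auto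
  have l: "labs N h" "labs N h'" using sw_labs[OF s g g'] by auto
  note j = i1[unfolded of_nat_add] i2[unfolded of_nat_add]
  show ?thesis using s l j by blast
qed

lemma UPA_upper:
  assumes x: "x \<le> N" and q: "q 1 \<le> q 2" "q 2 \<le> q 3"
  shows "\<exists>g. labs N g \<and> UP_cols N (Vf W q) (LA N x) \<le> Dg W N g + Rf N q (kA N x) g"
proof -
  have k: "\<And>j. kA N x j = real (LA N x ! (j - 1))" unfolding kA_def ..
  have m: "\<And>i j. 1 \<le> i \<Longrightarrow> i \<le> j \<Longrightarrow> j \<le> N \<Longrightarrow> kA N x i \<le> kA N x j"
    unfolding kA_def LA_def by (rule monoA[OF x])
  show ?thesis by (rule UP_upper[OF k m q])
qed

lemma UPB_upper:
  assumes yz: "y < z" "z \<le> N+1" and q: "q 1 \<le> q 2" "q 2 \<le> q 3"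
  shows "\<exists>g. labs N g \<and> UP_cols N (Vf W q) (LB N y z) \<le> Dg W N g + Rf N q (kB N y z) g"
proof -
  have k: "\<And>j. kB N y z j = real (LB N y z ! (j - 1))" unfolding kB_def ..
  have m: "\<And>i j. 1 \<le> i \<Longrightarrow> i \<le> j \<Longrightarrow> j \<le> N \<Longrightarrow> kB N y z i \<le> kB N y z j"
    unfolding kB_def LB_def by (rule monoB[OF yz])
  show ?thesis by (rule UP_upper[OF k m q])
qed

lemma UPA_lower: "labs N g \<Longrightarrow> Dg W N g + Rf N q (kA N x) g \<le> UP_cols N (Vf W q) (LA N x)"
  by (rule UP_lower[of "kA N x"]) (simp_all add: kA_def)
lemma UPB_lower: "labs N g \<Longrightarrow> Dg W N g + Rf N q (kB N y z) g \<le> UP_cols N (Vf W q) (LB N y z)"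
  by (rule UP_lower[of "kB N y z"]) (simp_all add: kB_def)


lemma core:
  fixes W :: "nat \<Rightarrow> nat \<Rightarrow> real" and q :: "nat \<Rightarrow> real" and N a b c :: nat
  assumes q12: "q 1 \<le> q 2" and q23: "q 2 \<le> q 3" and ab: "a < b" and bc: "b < c" and cN: "c \<le> N"
  shows "UP_cols N (Vf W q) (LA N b) + UP_cols N (Vf W q) (LB N a c)
       = max (UP_cols N (Vf W q) (LA N c) + UP_cols N (Vf W q) (LB N a b))
             (UP_cols N (Vf W q) (LA N a) + UP_cols N (Vf W q) (LB N b c))"
proof -
  define V where "V = Vf W q"
  define U0 where "U0 = UP_cols N V (LA N b) + UP_cols N V (LB N a c)"
  define U1 where "U1 = UP_cols N V (LA N c) + UP_cols N V (LB N a b)"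
  define U2 where "U2 = UP_cols N V (LA N a) + UP_cols N V (LB N b c)"
  define PV where "PV x y z g g' = Dg W N g + Dg W N g' + Rf N q (kA N x) g + Rf N q (kB N y z) g'" for x y z g g'
  have v0: "b \<le> N" "a < c" "c \<le> N+1" using ab bc cN by auto
  have v1: "c \<le> N" "a < b" "b \<le> N+1" using ab bc cN by auto
  have v2: "a \<le> N" "b < c" "c \<le> N+1" using ab bc cN by auto
  have ia: "0 \<le> int a" "int a < int b" "int b < int c" using ab bc by auto
  have low0: "\<And>h h'. labs N h \<Longrightarrow> labs N h' \<Longrightarrow> PV b a c h h' \<le> U0"
    unfolding PV_def U0_def V_def using UPA_lower UPB_lower by (smt (verit))
  have low1: "\<And>h h'. labs N h \<Longrightarrow> labs N h' \<Longrightarrow> PV c a b h h' \<le> U1"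
    unfolding PV_def U1_def V_def using UPA_lower UPB_lower by (smt (verit))
  have low2: "\<And>h h'. labs N h \<Longrightarrow> labs N h' \<Longrightarrow> PV a b c h h' \<le> U2"
    unfolding PV_def U2_def V_def using UPA_lower UPB_lower by (smt (verit))
  have U10: "U1 \<le> U0"
  proof -
    obtain g where g: "labs N g" "UP_cols N V (LA N c) \<le> Dg W N g + Rf N q (kA N c) g"
      using UPA_upper[OF v1(1) q12 q23] unfolding V_def by blast
    obtain g' where g': "labs N g'" "UP_cols N V (LB N a b) \<le> Dg W N g' + Rf N q (kB N a b) g'"
      using UPB_upper[OF v1(2,3) q12 q23] unfolding V_def by blast
    obtain h h' where s: "sw N g g' h h'" and l: "labs N h" "labs N h'"
      and h1: "int (c1 N h) = (int (c1 N g) + int (c1 N g') + 1) div 2" "int (c1 N h') = (int (c1 N g) + int (c1 N g')) div 2"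
      and h2: "int (c2 N h) = (int (c2 N g) + int (c2 N g') + 1) div 2" "int (c2 N h') = (int (c2 N g) + int (c2 N g')) div 2"
      using bal_int[OF g(1) g'(1)] by blast
    have "PV c a b g g' \<le> PV b a c h h'"
      unfolding PV_def
    proof (rule compare[OF v1 v0 _ g(1) g'(1) l s q12 q23])
      show "c + a + b = b + a + c" by simp
      show "Psi (int c) (int a) (int b) (int (c1 N g)) (int (c1 N g')) \<le> Psi (int b) (int a) (int c) (int (c1 N h)) (int (c1 N h'))"
        unfolding h1 by (rule B1[OF ia]) simp_all
      show "Psi (int c) (int a) (int b) (int (c2 N g)) (int (c2 N g')) \<le> Psi (int b) (int a) (int c) (int (c2 N h)) (int (c2 N h'))"
        unfolding h2 by (rule B1[OF ia]) simp_all
    qed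
    moreover have "U1 \<le> PV c a b g g'" unfolding U1_def PV_def using g(2) g'(2) by linarith
    ultimately show ?thesis using low0[OF l] by linarith
  qed
  have U20: "U2 \<le> U0"
  proof -
    obtain g where g: "labs N g" "UP_cols N V (LA N a) \<le> Dg W N g + Rf N q (kA N a) g"
      using UPA_upper[OF v2(1) q12 q23] unfolding V_def by blast
    obtain g' where g': "labs N g'" "UP_cols N V (LB N b c) \<le> Dg W N g' + Rf N q (kB N b c) g'"
      using UPB_upper[OF v2(2,3) q12 q23] unfolding V_def by blast
    obtain h h' where s: "sw N g g' h h'" and l: "labs N h" "labs N h'"
      and h1: "int (c1 N h) = (int (c1 N g) + int (c1 N g') + 1) div 2" "int (c1 N h') = (int (c1 N g) + int (c1 N g')) div 2"
      and h2: "int (c2 N h) = (int (c2 N g) + int (c2 N g') + 1) div 2" "int (c2 N h') = (int (c2 N g) + int (c2 N g')) div 2"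
      using bal_int[OF g(1) g'(1)] by blast
    have "PV a b c g g' \<le> PV b a c h h'"
      unfolding PV_def
    proof (rule compare[OF v2 v0 _ g(1) g'(1) l s q12 q23])
      show "a + b + c = b + a + c" by simp
      show "Psi (int a) (int b) (int c) (int (c1 N g)) (int (c1 N g')) \<le> Psi (int b) (int a) (int c) (int (c1 N h)) (int (c1 N h'))"
        unfolding h1 by (rule B2[OF ia]) simp_all
      show "Psi (int a) (int b) (int c) (int (c2 N g)) (int (c2 N g')) \<le> Psi (int b) (int a) (int c) (int (c2 N h)) (int (c2 N h'))"
        unfolding h2 by (rule B2[OF ia]) simp_all
    qed
    moreover have "U2 \<le> PV a b c g g'" unfolding U2_def PV_def using g(2) g'(2) by linarith
    ultimately show ?thesis using low0[OF l] by linarith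
  qed
  have U0m: "U0 \<le> max U1 U2"
  proof -
    obtain g where g: "labs N g" "UP_cols N V (LA N b) \<le> Dg W N g + Rf N q (kA N b) g"
      using UPA_upper[OF v0(1) q12 q23] unfolding V_def by blast
    obtain g' where g': "labs N g'" "UP_cols N V (LB N a c) \<le> Dg W N g' + Rf N q (kB N a c) g'"
      using UPB_upper[OF v0(2,3) q12 q23] unfolding V_def by blast
    have U0le: "U0 \<le> PV b a c g g'" unfolding U0_def PV_def using g(2) g'(2) by linarith
    define u where "u = int (c1 N g)"
    define u' where "u' = int (c1 N g')"
    define w where "w = int (c2 N g)"
    define w' where "w' = int (c2 N g')"
    have uw: "u \<le> w" "u' \<le> w'" unfolding u_def u'_def w_def w'_def using c1_le_c2 g(1) g'(1) by auto
    have nn: "0 \<le> u" "0 \<le> u'" "0 \<le> w" "0 \<le> w'" unfolding u_def u'_def w_def w'_def by auto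
    define cA1 where "cA1 t t' = (t = t' \<and> int b \<le> t \<and> t \<le> int c - 1)" for t t' :: int
    define cA2 where "cA2 t t' = (t = t' + 1 \<and> int a + 1 \<le> t \<and> t \<le> int b)" for t t' :: int
    show ?thesis
    proof (cases "\<not> cA1 u u' \<and> \<not> cA1 w w'")
      case True
      obtain h h' where s: "sw N g g' h h'" and l: "labs N h" "labs N h'"
        and h1: "int (c1 N h) = (u + u' + 1) div 2" "int (c1 N h') = (u + u') div 2"
        and h2: "int (c2 N h) = (w + w' + 1) div 2" "int (c2 N h') = (w + w') div 2"
        using bal_int[OF g(1) g'(1)] unfolding u_def u'_def w_def w'_def by blast
      have "PV b a c g g' \<le> PV c a b h h'"
        unfolding PV_def
      proof (rule compare[OF v0 v1 _ g(1) g'(1) l s q12 q23])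
        show "b + a + c = c + a + b" by simp
        show "Psi (int b) (int a) (int c) (int (c1 N g)) (int (c1 N g')) \<le> Psi (int c) (int a) (int b) (int (c1 N h)) (int (c1 N h'))"
          unfolding h1 u_def[symmetric] u'_def[symmetric] by (rule A1[OF ia nn(1,2)]) (use True in \<open>simp add: cA1_def\<close>)
        show "Psi (int b) (int a) (int c) (int (c2 N g)) (int (c2 N g')) \<le> Psi (int c) (int a) (int b) (int (c2 N h)) (int (c2 N h'))"
          unfolding h2 w_def[symmetric] w'_def[symmetric] by (rule A1[OF ia nn(3,4)]) (use True in \<open>simp add: cA1_def\<close>)
      qed
      then show ?thesis using U0le low1[OF l] by linarith
    next
      case F1: False
      show ?thesis
      proof (cases "\<not> cA2 u u' \<and> \<not> cA2 w w'")
        case True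
        obtain h h' where s: "sw N g g' h h'" and l: "labs N h" "labs N h'"
          and h1: "int (c1 N h) = (u + u' + 1) div 2" "int (c1 N h') = (u + u') div 2"
          and h2: "int (c2 N h) = (w + w' + 1) div 2" "int (c2 N h') = (w + w') div 2"
          using bal_int[OF g(1) g'(1)] unfolding u_def u'_def w_def w'_def by blast
        have "PV b a c g g' \<le> PV a b c h h'"
          unfolding PV_def
        proof (rule compare[OF v0 v2 _ g(1) g'(1) l s q12 q23])
          show "b + a + c = a + b + c" by simp
          show "Psi (int b) (int a) (int c) (int (c1 N g)) (int (c1 N g')) \<le> Psi (int a) (int b) (int c) (int (c1 N h)) (int (c1 N h'))"
            unfolding h1 u_def[symmetric] u'_def[symmetric] by (rule A2[OF ia nn(1,2)]) (use True in \<open>simp add: cA2_def\<close>)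
          show "Psi (int b) (int a) (int c) (int (c2 N g)) (int (c2 N g')) \<le> Psi (int a) (int b) (int c) (int (c2 N h)) (int (c2 N h'))"
            unfolding h2 w_def[symmetric] w'_def[symmetric] by (rule A2[OF ia nn(3,4)]) (use True in \<open>simp add: cA2_def\<close>)
        qed
        then show ?thesis using U0le low2[OF l] by linarith
      next
        case F2: False
        have cu: "u = u' + 1" "int a + 1 \<le> u" "u \<le> int b" and cw: "w = w'" "int b \<le> w" "w \<le> int c - 1"
          using F1 F2 uw unfolding cA1_def cA2_def by auto
        have e1: "c1 N g = c1 N g' + 1" using cu(1) unfolding u_def u'_def by simp
        have e2: "c2 N g = c2 N g'" using cw(1) unfolding w_def w'_def by simp
        from flip[OF g(1) g'(1) e1 e2] show ?thesis
        proof
          assume "\<exists>h h'. sw N g g' h h' \<and> c1 N h + 1 = c1 N g \<and> c2 N h = c2 N g"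
          then obtain h h' where s: "sw N g g' h h'" and hc: "c1 N h + 1 = c1 N g" "c2 N h = c2 N g" by blast
          have l: "labs N h" "labs N h'" using sw_labs[OF s g(1) g'(1)] by auto
          have hc': "c1 N h' = c1 N g' + 1" "c2 N h' = c2 N g'" using sw_c1[OF s] sw_c2[OF s] hc by auto
          have "PV b a c g g' \<le> PV a b c h h'"
            unfolding PV_def
          proof (rule compare[OF v0 v2 _ g(1) g'(1) l s q12 q23])
            show "b + a + c = a + b + c" by simp
            have "int (c1 N h) = u - 1" "int (c1 N h') = u' + 1" using hc hc' unfolding u_def u'_def by auto
            then show "Psi (int b) (int a) (int c) (int (c1 N g)) (int (c1 N g')) \<le> Psi (int a) (int b) (int c) (int (c1 N h)) (int (c1 N h'))"
              unfolding u_def[symmetric] u'_def[symmetric] using A3[OF ia cu] by simp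
            have "int (c2 N h) = w" "int (c2 N h') = w'" using hc hc' unfolding w_def w'_def by auto
            moreover have "Psi (int b) (int a) (int c) w w' \<le> Psi (int a) (int b) (int c) ((w + w' + 1) div 2) ((w + w') div 2)"
              by (rule A2[OF ia nn(3,4)]) (use cw in simp)
            moreover have "(w + w' + 1) div 2 = w" "(w + w') div 2 = w'" using cw(1) by auto
            ultimately show "Psi (int b) (int a) (int c) (int (c2 N g)) (int (c2 N g')) \<le> Psi (int a) (int b) (int c) (int (c2 N h)) (int (c2 N h'))"
              unfolding w_def[symmetric] w'_def[symmetric] by simp
          qed
          then show ?thesis using U0le low2[OF l] by linarith
        next
          assume "\<exists>h h'. sw N g g' h h' \<and> c1 N h = c1 N g \<and> c2 N h = c2 N g + 1"
          then obtain h h' where s: "sw N g g' h h'" and hc: "c1 N h = c1 N g" "c2 N h = c2 N g + 1" by blast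
          have l: "labs N h" "labs N h'" using sw_labs[OF s g(1) g'(1)] by auto
          have hc': "c1 N h' = c1 N g'" "c2 N h' + 1 = c2 N g'" using sw_c1[OF s] sw_c2[OF s] hc by auto
          have "PV b a c g g' \<le> PV c a b h h'"
            unfolding PV_def
          proof (rule compare[OF v0 v1 _ g(1) g'(1) l s q12 q23])
            show "b + a + c = c + a + b" by simp
            have "int (c1 N h) = u" "int (c1 N h') = u'" using hc hc' unfolding u_def u'_def by auto
            moreover have "Psi (int b) (int a) (int c) u u' \<le> Psi (int c) (int a) (int b) ((u + u' + 1) div 2) ((u + u') div 2)"
              by (rule A1[OF ia nn(1,2)]) (use cu in simp)
            moreover have "(u + u' + 1) div 2 = u" "(u + u') div 2 = u'" using cu(1) by auto
            ultimately show "Psi (int b) (int a) (int c) (int (c1 N g)) (int (c1 N g')) \<le> Psi (int c) (int a) (int b) (int (c1 N h)) (int (c1 N h'))"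
              unfolding u_def[symmetric] u'_def[symmetric] by simp
            have "int (c2 N h) = w + 1" "int (c2 N h') = w' - 1" using hc hc' unfolding w_def w'_def by auto
            then show "Psi (int b) (int a) (int c) (int (c2 N g)) (int (c2 N g')) \<le> Psi (int c) (int a) (int b) (int (c2 N h)) (int (c2 N h'))"
              unfolding w_def[symmetric] w'_def[symmetric] using A4[OF ia cw] by simp
          qed
          then show ?thesis using U0le low1[OF l] by linarith
        qed
      qed
    qed
  qed
  have "U0 = max U1 U2" using U0m U10 U20 by linarith
  then show ?thesis unfolding U0_def U1_def U2_def V_def .
qed


lemma eta_s1: "eta p a1 a2 a3 j l m n (s + 1) = eta p a1 a2 a3 j l m n s + p j"
  unfolding eta_def by (simp add: algebra_simps)
lemma eta_sm1: "eta p a1 a2 a3 j l m n (s - 1) = eta p a1 a2 a3 j l m n s - p j"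
  unfolding eta_def by (simp add: algebra_simps)
lemma eta_l1: "eta p a1 a2 a3 j (l + 1) m n s = eta p a1 a2 a3 j l m n s + max 0 (p j - a1)"
  unfolding eta_def by (simp add: algebra_simps)
lemma eta_m1: "eta p a1 a2 a3 j l (m + 1) n s = eta p a1 a2 a3 j l m n s + max 0 (p j - a2)"
  unfolding eta_def by (simp add: algebra_simps)
lemma eta_n1: "eta p a1 a2 a3 j l m (n + 1) s = eta p a1 a2 a3 j l m n s + max 0 (p j - a3)"
  unfolding eta_def by (simp add: algebra_simps)

lemma Max_max:
  fixes f g :: "nat \<Rightarrow> real"
  assumes "finite A" "A \<noteq> {}"
  shows "Max ((\<lambda>j. max (f j) (g j)) ` A) = max (Max (f ` A)) (Max (g ` A))"
proof (rule antisym)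
  show "Max ((\<lambda>j. max (f j) (g j)) ` A) \<le> max (Max (f ` A)) (Max (g ` A))"
  proof (rule Max.boundedI)
    show "finite ((\<lambda>j. max (f j) (g j)) ` A)" "(\<lambda>j. max (f j) (g j)) ` A \<noteq> {}" using assms by auto
    fix x assume "x \<in> (\<lambda>j. max (f j) (g j)) ` A"
    then obtain j where j: "j \<in> A" "x = max (f j) (g j)" by auto
    have "f j \<le> Max (f ` A)" "g j \<le> Max (g ` A)" using assms j by (auto intro: Max_ge)
    then show "x \<le> max (Max (f ` A)) (Max (g ` A))" using j by linarith
  qed
  show "max (Max (f ` A)) (Max (g ` A)) \<le> Max ((\<lambda>j. max (f j) (g j)) ` A)"
  proof -
    have fh: "finite ((\<lambda>j. max (f j) (g j)) ` A)" using assms by auto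
    have "Max (f ` A) \<in> f ` A" using assms by (intro Max_in) auto
    then obtain j1 where j1: "j1 \<in> A" "Max (f ` A) = f j1" by (metis imageE)
    have "Max (g ` A) \<in> g ` A" using assms by (intro Max_in) auto
    then obtain j2 where j2: "j2 \<in> A" "Max (g ` A) = g j2" by (metis imageE)
    have "max (f j1) (g j1) \<le> Max ((\<lambda>j. max (f j) (g j)) ` A)" using fh j1 by (intro Max_ge) auto
    moreover have "max (f j2) (g j2) \<le> Max ((\<lambda>j. max (f j) (g j)) ` A)" using fh j2 by (intro Max_ge) auto
    ultimately show ?thesis using j1 j2 by linarith
  qed
qed

lemma shift_step:
  fixes d a :: real
  assumes M: "M \<ge> 1"
    and e: "\<And>j. eta p a1 a2 a3 j l' m' n' s = eta p a1 a2 a3 j l m n s + max 0 (p j - a)"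
  shows "phi M c p a1 a2 a3 i l' m' n' s = max (phi M c p a1 a2 a3 i l m n s) (phi M c p a1 a2 a3 i l m n (s + 1) - a)"
proof -
  have fin: "finite {1..M}" "{1..M} \<noteq> {}" using M by auto
  have "phi M c p a1 a2 a3 i l' m' n' s = Max ((\<lambda>j. max (c i j + eta p a1 a2 a3 j l m n s) ((c i j + eta p a1 a2 a3 j l m n (s+1)) - a)) ` {1..M})"
    unfolding phi_def e eta_s1 by (rule arg_cong[where f=Max], rule image_cong[OF refl]) (simp add: max_def algebra_simps)
  also have "\<dots> = max (phi M c p a1 a2 a3 i l m n s) (Max ((\<lambda>j. (c i j + eta p a1 a2 a3 j l m n (s+1)) + (- a)) ` {1..M}))"
    unfolding Max_max[OF fin] phi_def by simp
  also have "Max ((\<lambda>j. (c i j + eta p a1 a2 a3 j l m n (s+1)) + (- a)) ` {1..M}) = phi M c p a1 a2 a3 i l m n (s + 1) - a"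
    unfolding phi_def using Max_add_commute[OF fin, of "\<lambda>j. c i j + eta p a1 a2 a3 j l m n (s+1)" "-a"] by simp
  finally show ?thesis .
qed

lemma part2:
  fixes c :: "nat \<Rightarrow> nat \<Rightarrow> real" and p :: "nat \<Rightarrow> real" and a1 a2 a3 :: real
  assumes M: "M \<ge> 1"
  defines "\<phi> \<equiv> phi M c p a1 a2 a3"
  shows "\<phi> i1 l m n s + \<phi> i2 l m n s \<le> max (\<phi> i1 l m n (s - 1) + \<phi> i2 l m n (s + 1)) (\<phi> i2 l m n (s - 1) + \<phi> i1 l m n (s + 1))"
proof -
  have fin: "finite {1..M}" "{1..M} \<noteq> {}" using M by auto
  have ex: "\<And>i t. \<exists>j\<in>{1..M}. \<phi> i l m n t = c i j + eta p a1 a2 a3 j l m n t"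
  proof -
    fix i t
    have "Max ((\<lambda>j. c i j + eta p a1 a2 a3 j l m n t) ` {1..M}) \<in> (\<lambda>j. c i j + eta p a1 a2 a3 j l m n t) ` {1..M}"
      using fin by (intro Max_in) auto
    then show "\<exists>j\<in>{1..M}. \<phi> i l m n t = c i j + eta p a1 a2 a3 j l m n t" unfolding \<phi>_def phi_def by auto
  qed
  have ge: "\<And>i t j. j \<in> {1..M} \<Longrightarrow> c i j + eta p a1 a2 a3 j l m n t \<le> \<phi> i l m n t"
    unfolding \<phi>_def phi_def using fin by (intro Max_ge) auto
  obtain j1 where j1: "j1 \<in> {1..M}" "\<phi> i1 l m n s = c i1 j1 + eta p a1 a2 a3 j1 l m n s" using ex by blast
  obtain j2 where j2: "j2 \<in> {1..M}" "\<phi> i2 l m n s = c i2 j2 + eta p a1 a2 a3 j2 l m n s" using ex by blast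
  have x1: "\<phi> i1 l m n (s - 1) \<ge> \<phi> i1 l m n s - p j1" using ge[OF j1(1), of i1 "s - 1"] j1(2) eta_sm1 by simp
  have x2: "\<phi> i1 l m n (s + 1) \<ge> \<phi> i1 l m n s + p j1" using ge[OF j1(1), of i1 "s + 1"] j1(2) eta_s1 by simp
  have y1: "\<phi> i2 l m n (s - 1) \<ge> \<phi> i2 l m n s - p j2" using ge[OF j2(1), of i2 "s - 1"] j2(2) eta_sm1 by simp
  have y2: "\<phi> i2 l m n (s + 1) \<ge> \<phi> i2 l m n s + p j2" using ge[OF j2(1), of i2 "s + 1"] j2(2) eta_s1 by simp
  show ?thesis using x1 x2 y1 y2 by linarith
qed


lemma tri_tau:
  assumes "{i, j, k} = {1..M}" "p i \<le> p j" "p j \<le> (p k::real)"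
  shows "\<exists>\<tau>::nat\<Rightarrow>nat. \<tau> ` {1,2,3} = {1..M} \<and> p (\<tau> 1) \<le> p (\<tau> 2) \<and> p (\<tau> 2) \<le> p (\<tau> 3)"
proof (intro exI conjI)
  let ?\<tau> = "\<lambda>l::nat. if l = 1 then i else if l = 2 then j else k"
  have "?\<tau> ` {1,2,3} = {i,j,k}" by auto
  then show "?\<tau> ` {1,2,3} = {1..M}" using assms(1) by simp
  show "p (?\<tau> 1) \<le> p (?\<tau> 2)" "p (?\<tau> 2) \<le> p (?\<tau> 3)" using assms(2,3) by simp_all
qed

lemma sort_tau:
  fixes p :: "nat \<Rightarrow> real"
  assumes "M \<in> {1,2,3}"
  shows "\<exists>\<tau>::nat\<Rightarrow>nat. \<tau> ` {1,2,3} = {1..M} \<and> p (\<tau> 1) \<le> p (\<tau> 2) \<and> p (\<tau> 2) \<le> p (\<tau> 3)"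
proof -
  have M: "M = 1 \<or> M = 2 \<or> M = 3" using assms by auto
  have s1: "{1..1::nat} = {1}" "{1..2::nat} = {1,2}" "{1..3::nat} = {1,2,3}" by auto
  show ?thesis
  proof (cases "M = 1")
    case True then show ?thesis using tri_tau[of 1 1 1 M p] s1 by simp
  next
    case M1: False
    show ?thesis
    proof (cases "M = 2")
      case True
      show ?thesis
      proof (cases "p 1 \<le> p 2")
        case True then show ?thesis using tri_tau[of 1 2 2 M p] s1 \<open>M = 2\<close> by (simp add: insert_commute)
      next
        case False then show ?thesis using tri_tau[of 2 1 1 M p] s1 \<open>M = 2\<close> by (simp add: insert_commute)
      qed
    next
      case False
      then have M3: "M = 3" using M M1 by simp
      have t: "\<And>i j k. {i, j, k} = {1,2,3::nat} \<Longrightarrow> p i \<le> p j \<Longrightarrow> p j \<le> p k \<Longrightarrow> ?thesis"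
        using tri_tau[of _ _ _ M p] M3 s1 by metis
      show ?thesis
      proof (cases "p 1 \<le> p 2")
        case a: True
        show ?thesis
        proof (cases "p 2 \<le> p 3")
          case True then show ?thesis using t[of 1 2 3] a by simp
        next
          case b: False
          show ?thesis
          proof (cases "p 1 \<le> p 3")
            case True then show ?thesis using t[of 1 3 2] b by (simp add: insert_commute)
          next
            case False then show ?thesis using t[of 3 1 2] a by (simp add: insert_commute)
          qed
        qed
      next
        case a: False
        show ?thesis
        proof (cases "p 1 \<le> p 3")
          case True then show ?thesis using t[of 2 1 3] a by (simp add: insert_commute)
        next
          case b: False
          show ?thesis
          proof (cases "p 2 \<le> p 3")
            case True then show ?thesis using t[of 2 3 1] b by (simp add: insert_commute)
          next
            case False then show ?thesis using t[of 3 2 1] a by (simp add: insert_commute)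
          qed
        qed
      qed
    qed
  qed
qed

lemma eta_k: "eta p a1 a2 a3 j l m n (int k) = eta p a1 a2 a3 j l m n 0 + p j * real k"
  unfolding eta_def by simp

lemma phi_V:
  assumes \<tau>: "\<tau> ` {1,2,3} = {1..M}"
  shows "(\<lambda>k i. phi M c p a1 a2 a3 i l m n (int k)) = Vf (\<lambda>i t. c i (\<tau> t) + eta p a1 a2 a3 (\<tau> t) l m n 0) (\<lambda>t. p (\<tau> t))"
proof (intro ext)
  fix k i
  let ?F = "\<lambda>j. c i j + eta p a1 a2 a3 j l m n (int k)"
  have "phi M c p a1 a2 a3 i l m n (int k) = Max (?F ` {1..M})" unfolding phi_def ..
  also have "?F ` {1..M} = {?F (\<tau> 1), ?F (\<tau> 2), ?F (\<tau> 3)}" unfolding \<tau>[symmetric] by auto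
  also have "Max {?F (\<tau> 1), ?F (\<tau> 2), ?F (\<tau> 3)} = max (?F (\<tau> 1)) (max (?F (\<tau> 2)) (?F (\<tau> 3)))" by simp
  finally show "phi M c p a1 a2 a3 i l m n (int k) = Vf (\<lambda>i t. c i (\<tau> t) + eta p a1 a2 a3 (\<tau> t) l m n 0) (\<lambda>t. p (\<tau> t)) k i"
    unfolding Vf_def eta_k by (simp add: max.assoc algebra_simps)
qed

theorem proposition4p2:
  fixes N M :: nat and a1 a2 a3 :: real
    and c :: "nat \<Rightarrow> nat \<Rightarrow> real" and p :: "nat \<Rightarrow> real"
  assumes "N \<ge> 1" and "M \<ge> 1"
  defines "\<phi> \<equiv> phi M c p a1 a2 a3"
  shows
   "(\<forall>i l m n s. 1 \<le> i \<and> i \<le> N \<longrightarrow>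
        \<phi> i (l + 1) m n s = max (\<phi> i l m n s) (\<phi> i l m n (s + 1) - a1)
      \<and> \<phi> i l (m + 1) n s = max (\<phi> i l m n s) (\<phi> i l m n (s + 1) - a2)
      \<and> \<phi> i l m (n + 1) s = max (\<phi> i l m n s) (\<phi> i l m n (s + 1) - a3))
  \<and> (\<forall>i1 i2 l m n s. 1 \<le> i1 \<and> i1 \<le> N \<and> 1 \<le> i2 \<and> i2 \<le> N \<longrightarrow>
        \<phi> i1 l m n s + \<phi> i2 l m n s
          \<le> max (\<phi> i1 l m n (s - 1) + \<phi> i2 l m n (s + 1))
                (\<phi> i2 l m n (s - 1) + \<phi> i1 l m n (s + 1)))
  \<and> (M \<in> {1, 2, 3} \<longrightarrow>
      (\<forall>l m n k1 k2 k3. k1 < k2 \<and> k2 < k3 \<and> k3 \<le> N \<longrightarrow>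
        (let v = (\<lambda>k i. \<phi> i l m n (int k));
             C1 = (\<lambda>x. [k \<leftarrow> [0..<N + 1]. k \<noteq> x]);
             C2 = (\<lambda>x y. [k \<leftarrow> [0..<N + 2]. k \<noteq> x \<and> k \<noteq> y])
         in UP_cols N v (C1 k2) + UP_cols N v (C2 k1 k3)
            = max (UP_cols N v (C1 k3) + UP_cols N v (C2 k1 k2))
                  (UP_cols N v (C1 k1) + UP_cols N v (C2 k2 k3)))))"
proof -
  have M1: "M \<ge> 1" using assms by simp
  have P1: "\<forall>i l m n s. 1 \<le> i \<and> i \<le> N \<longrightarrow>
        \<phi> i (l + 1) m n s = max (\<phi> i l m n s) (\<phi> i l m n (s + 1) - a1)
      \<and> \<phi> i l (m + 1) n s = max (\<phi> i l m n s) (\<phi> i l m n (s + 1) - a2)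
      \<and> \<phi> i l m (n + 1) s = max (\<phi> i l m n s) (\<phi> i l m n (s + 1) - a3)"
    unfolding \<phi>_def
    by (intro allI impI conjI) (rule shift_step[OF M1 eta_l1], rule shift_step[OF M1 eta_m1], rule shift_step[OF M1 eta_n1])
  have P2: "\<forall>i1 i2 l m n s. 1 \<le> i1 \<and> i1 \<le> N \<and> 1 \<le> i2 \<and> i2 \<le> N \<longrightarrow>
        \<phi> i1 l m n s + \<phi> i2 l m n s
          \<le> max (\<phi> i1 l m n (s - 1) + \<phi> i2 l m n (s + 1))
                (\<phi> i2 l m n (s - 1) + \<phi> i1 l m n (s + 1))"
    unfolding \<phi>_def using part2[OF M1] by blast
  have P3: "M \<in> {1, 2, 3} \<longrightarrow>
      (\<forall>l m n k1 k2 k3. k1 < k2 \<and> k2 < k3 \<and> k3 \<le> N \<longrightarrow>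
        (let v = (\<lambda>k i. \<phi> i l m n (int k));
             C1 = (\<lambda>x. [k \<leftarrow> [0..<N + 1]. k \<noteq> x]);
             C2 = (\<lambda>x y. [k \<leftarrow> [0..<N + 2]. k \<noteq> x \<and> k \<noteq> y])
         in UP_cols N v (C1 k2) + UP_cols N v (C2 k1 k3)
            = max (UP_cols N v (C1 k3) + UP_cols N v (C2 k1 k2))
                  (UP_cols N v (C1 k1) + UP_cols N v (C2 k2 k3))))"
  proof (intro impI allI)
    fix l m n :: int and k1 k2 k3 :: nat
    assume M: "M \<in> {1,2,3}"
    assume k: "k1 < k2 \<and> k2 < k3 \<and> k3 \<le> N"
    obtain \<tau> :: "nat \<Rightarrow> nat" where \<tau>: "\<tau> ` {1,2,3} = {1..M}" "p (\<tau> 1) \<le> p (\<tau> 2)" "p (\<tau> 2) \<le> p (\<tau> 3)"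
      using sort_tau[OF M] by blast
    define W where "W = (\<lambda>i t. c i (\<tau> t) + eta p a1 a2 a3 (\<tau> t) l m n 0)"
    define q where "q = (\<lambda>t. p (\<tau> t))"
    have V: "(\<lambda>k i. \<phi> i l m n (int k)) = Vf W q" unfolding \<phi>_def W_def q_def by (rule phi_V[OF \<tau>(1)])
    have q12: "q 1 \<le> q 2" and q23: "q 2 \<le> q 3" unfolding q_def using \<tau> by auto
    have C: "UP_cols N (Vf W q) (LA N k2) + UP_cols N (Vf W q) (LB N k1 k3)
       = max (UP_cols N (Vf W q) (LA N k3) + UP_cols N (Vf W q) (LB N k1 k2))
             (UP_cols N (Vf W q) (LA N k1) + UP_cols N (Vf W q) (LB N k2 k3))"
      using core[OF q12 q23] k by blast
    show "let v = (\<lambda>k i. \<phi> i l m n (int k));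
             C1 = (\<lambda>x. [k \<leftarrow> [0..<N + 1]. k \<noteq> x]);
             C2 = (\<lambda>x y. [k \<leftarrow> [0..<N + 2]. k \<noteq> x \<and> k \<noteq> y])
         in UP_cols N v (C1 k2) + UP_cols N v (C2 k1 k3)
            = max (UP_cols N v (C1 k3) + UP_cols N v (C2 k1 k2))
                  (UP_cols N v (C1 k1) + UP_cols N v (C2 k2 k3))"
      unfolding Let_def V using C unfolding LA_def LB_def .
  qed
  show ?thesis using P1 P2 P3 by blast
qed


end
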